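(* Let $\rho_{00}$ be a probability density on $\mathbb{R}^n$ and, for $T\colon[0,1]^2\times\mathbb{R}^n\to\mathbb{R}^n$, let $$D(s,t,T)=\Big(\int \|\partial_s T(s,t,x)\|^2\rho_{00}(x)dx\cdot \int\|\partial_t T(s,t,x)\|^2\rho_{00}(x) dx-\Big(\int \partial_s T(s,t,x)\cdot \partial_t T(s,t,x) \rho_{00}(x)dx\Big)^2 \Big)^{1/2}.$$ The Euler–Lagrange equation of the variational problem $\inf_T\int_0^1\int_0^1 D(s,t,T)\,ds\,dt$, with fixed boundary conditions $T(0,t,\cdot)_\#\rho_{00}=\rho_{0t}$, $T(1,t,\cdot)_\#\rho_{00}=\rho_{1t}$, $T(s,0,\cdot)_\#\rho_{00}=\rho_{s0}$, $T(s,1,\cdot)_\#\rho_{00}=\rho_{s1}$, is the second-order PDE $$\partial_{s}\Big(\partial_sT\, D^{-1}\int \|\partial_tT\|^2\rho_{00}dx\Big)+ \partial_{t}\Big(\partial_tT\, D^{-1} \int \|\partial_sT\|^2\rho_{00}dx\Big)-\partial_t\Big( \partial_{s}T\, D^{-1}\int \partial_s T\cdot\partial_tT\rho_{00}dx \Big)-\partial_s\Big( \partial_{t}T\, D^{-1}\int \partial_s T\cdot\partial_tT\rho_{00}dx \Big) =0,$$ where $D=D(s,t,T)$, with the same boundary conditions.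
   Context: All integrals are over $\mathbb{R}^n$; $T_\#\mu$ denotes pushforward; $\rho_{st}$, $s,t\in[0,1]$, are prescribed boundary densities forming Wasserstein-2 geodesics along the four edges of $[0,1]^2$. The Euler–Lagrange equation is obtained from vanishing first variation against smooth test maps $\delta T$ vanishing on the four boundary edges. *)

theory Defs
  imports "HOL-Analysis.Analysis"
begin

text \<open>Maps T : [0,1]^2 x R^n -> R^n are modelled as functions
  real => real => 'a => 'a with 'a a Euclidean space (R^n).
  Partial derivatives in s and t are carried as explicit functions,
  tied to T by the predicate C1_param.\<close>

definition unit_sq :: "(real \<times> real) set" where
  "unit_sq = {0..1} \<times> {0..1}"

definition wint :: "('a::euclidean_space \<Rightarrow> real) \<Rightarrow> ('a \<Rightarrow> real) \<Rightarrow> real" where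
  "wint \<rho> f = (LINT x|lborel. f x * \<rho> x)"

text \<open>D(s,t,T), with P = partial_s T and Q = partial_t T.\<close>
definition Dfun :: "('a::euclidean_space \<Rightarrow> real) \<Rightarrow> (real \<Rightarrow> real \<Rightarrow> 'a \<Rightarrow> 'a)
    \<Rightarrow> (real \<Rightarrow> real \<Rightarrow> 'a \<Rightarrow> 'a) \<Rightarrow> real \<Rightarrow> real \<Rightarrow> real" where
  "Dfun \<rho> P Q s t =
     sqrt (wint \<rho> (\<lambda>x. (norm (P s t x))\<^sup>2) * wint \<rho> (\<lambda>x. (norm (Q s t x))\<^sup>2)
           - (wint \<rho> (\<lambda>x. P s t x \<bullet> Q s t x))\<^sup>2)"

definition action :: "('a::euclidean_space \<Rightarrow> real) \<Rightarrow> (real \<Rightarrow> real \<Rightarrow> 'a \<Rightarrow> 'a)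
    \<Rightarrow> (real \<Rightarrow> real \<Rightarrow> 'a \<Rightarrow> 'a) \<Rightarrow> real" where
  "action \<rho> P Q = integral {0..1} (\<lambda>s. integral {0..1} (\<lambda>t. Dfun \<rho> P Q s t))"

definition C1_param :: "(real \<Rightarrow> real \<Rightarrow> 'a \<Rightarrow> 'b::real_normed_vector)
    \<Rightarrow> (real \<Rightarrow> real \<Rightarrow> 'a \<Rightarrow> 'b) \<Rightarrow> (real \<Rightarrow> real \<Rightarrow> 'a \<Rightarrow> 'b) \<Rightarrow> bool" where
  "C1_param F Fs Ft \<longleftrightarrow>
     (\<forall>x. (\<forall>p\<in>unit_sq.
            ((\<lambda>q. F (fst q) (snd q) x) has_derivative
               (\<lambda>h. fst h *\<^sub>R Fs (fst p) (snd p) x + snd h *\<^sub>R Ft (fst p) (snd p) x))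
            (at p within unit_sq))
        \<and> continuous_on unit_sq (\<lambda>q. Fs (fst q) (snd q) x)
        \<and> continuous_on unit_sq (\<lambda>q. Ft (fst q) (snd q) x))"

definition L2_dominated :: "('a::euclidean_space \<Rightarrow> real) \<Rightarrow> (real \<Rightarrow> real \<Rightarrow> 'a \<Rightarrow> 'a) list \<Rightarrow> bool" where
  "L2_dominated \<rho> Fs \<longleftrightarrow>
     (\<forall>F\<in>set Fs. \<forall>p\<in>unit_sq. F (fst p) (snd p) \<in> borel_measurable lborel) \<and>
     (\<exists>g. g \<in> borel_measurable lborel \<and> integrable lborel (\<lambda>x. (g x)\<^sup>2 * \<rho> x) \<and>
          (\<forall>F\<in>set Fs. \<forall>p\<in>unit_sq. \<forall>x. norm (F (fst p) (snd p) x) \<le> g x))"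

definition test_map :: "('a::euclidean_space \<Rightarrow> real) \<Rightarrow> (real \<Rightarrow> real \<Rightarrow> 'a \<Rightarrow> 'a)
    \<Rightarrow> (real \<Rightarrow> real \<Rightarrow> 'a \<Rightarrow> 'a) \<Rightarrow> (real \<Rightarrow> real \<Rightarrow> 'a \<Rightarrow> 'a) \<Rightarrow> bool" where
  "test_map \<rho> V Vs Vt \<longleftrightarrow>
     C1_param V Vs Vt \<and>
     (\<forall>r\<in>{0..1}. \<forall>x. V 0 r x = 0 \<and> V 1 r x = 0 \<and> V r 0 x = 0 \<and> V r 1 x = 0) \<and>
     L2_dominated \<rho> [V, Vs, Vt]"

text \<open>Vanishing first variation: for every admissible delta T, the derivative
  of epsilon |-> J(T + epsilon delta T) at epsilon = 0 exists and is 0.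
  Note partial_s (T + eps V) = Ts + eps Vs, etc.\<close>
definition stationary :: "('a::euclidean_space \<Rightarrow> real) \<Rightarrow> (real \<Rightarrow> real \<Rightarrow> 'a \<Rightarrow> 'a)
    \<Rightarrow> (real \<Rightarrow> real \<Rightarrow> 'a \<Rightarrow> 'a) \<Rightarrow> bool" where
  "stationary \<rho> Ts Tt \<longleftrightarrow>
     (\<forall>V Vs Vt. test_map \<rho> V Vs Vt \<longrightarrow>
        ((\<lambda>\<epsilon>. action \<rho> (\<lambda>s t x. Ts s t x + \<epsilon> *\<^sub>R Vs s t x)
                           (\<lambda>s t x. Tt s t x + \<epsilon> *\<^sub>R Vt s t x)) has_real_derivative 0) (at 0))"

definition EL_lhs :: "('a::euclidean_space \<Rightarrow> real) \<Rightarrow> (real \<Rightarrow> real \<Rightarrow> 'a \<Rightarrow> 'a)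
    \<Rightarrow> (real \<Rightarrow> real \<Rightarrow> 'a \<Rightarrow> 'a) \<Rightarrow> real \<Rightarrow> real \<Rightarrow> 'a \<Rightarrow> 'a" where
  "EL_lhs \<rho> Ts Tt s t x =
      vector_derivative (\<lambda>\<sigma>. (wint \<rho> (\<lambda>y. (norm (Tt \<sigma> t y))\<^sup>2) / Dfun \<rho> Ts Tt \<sigma> t) *\<^sub>R Ts \<sigma> t x) (at s)
    + vector_derivative (\<lambda>\<tau>. (wint \<rho> (\<lambda>y. (norm (Ts s \<tau> y))\<^sup>2) / Dfun \<rho> Ts Tt s \<tau>) *\<^sub>R Tt s \<tau> x) (at t)
    - vector_derivative (\<lambda>\<tau>. (wint \<rho> (\<lambda>y. Ts s \<tau> y \<bullet> Tt s \<tau> y) / Dfun \<rho> Ts Tt s \<tau>) *\<^sub>R Ts s \<tau> x) (at t)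
    - vector_derivative (\<lambda>\<sigma>. (wint \<rho> (\<lambda>y. Ts \<sigma> t y \<bullet> Tt \<sigma> t y) / Dfun \<rho> Ts Tt \<sigma> t) *\<^sub>R Tt \<sigma> t x) (at s)"

end

theory Submission
  imports Defs
begin

lemma vd_inner:
  fixes F G :: "real \<Rightarrow> 'a::real_inner"
  assumes "(F has_vector_derivative F') (at y within S)"
    and "(G has_vector_derivative G') (at y within S)"
  shows "((\<lambda>y. F y \<bullet> G y) has_real_derivative (F' \<bullet> G y + F y \<bullet> G')) (at y within S)"
proof -
  have "((\<lambda>y. F y \<bullet> G y) has_derivative (\<lambda>h. F y \<bullet> (h *\<^sub>R G') + (h *\<^sub>R F') \<bullet> G y)) (at y within S)"
    using assms unfolding has_vector_derivative_def by (intro has_derivative_inner)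
  then show ?thesis unfolding has_field_derivative_def
    by (rule has_derivative_eq_rhs) (auto simp: algebra_simps fun_eq_iff)
qed

lemma int_inner:
  fixes F G :: "'a::euclidean_space \<Rightarrow> 'a" and \<rho> g :: "'a \<Rightarrow> real"
  assumes \<rho>m: "\<rho> \<in> borel_measurable lborel" and \<rho>0: "\<And>x. \<rho> x \<ge> 0"
    and gi: "integrable lborel (\<lambda>x. (g x)\<^sup>2 * \<rho> x)"
    and Fm: "F \<in> borel_measurable lborel" and Gm: "G \<in> borel_measurable lborel"
    and Fb: "\<And>x. norm (F x) \<le> g x" and Gb: "\<And>x. norm (G x) \<le> g x"
  shows "integrable lborel (\<lambda>x. (F x \<bullet> G x) * \<rho> x)"
proof (rule Bochner_Integration.integrable_bound[OF gi])
  show "(\<lambda>x. (F x \<bullet> G x) * \<rho> x) \<in> borel_measurable lborel" using Fm Gm \<rho>m by measurable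
  show "AE x in lborel. norm ((F x \<bullet> G x) * \<rho> x) \<le> norm ((g x)\<^sup>2 * \<rho> x)"
  proof (intro AE_I2)
    fix x
    have "\<bar>F x \<bullet> G x\<bar> \<le> norm (F x) * norm (G x)" by (rule Cauchy_Schwarz_ineq2)
    also have "\<dots> \<le> g x * g x" using Fb[of x] Gb[of x] by (intro mult_mono) (auto intro: order_trans[OF norm_ge_zero])
    finally have "\<bar>F x \<bullet> G x\<bar> * \<rho> x \<le> (g x)\<^sup>2 * \<rho> x"
      using \<rho>0[of x] by (simp add: power2_eq_square mult_right_mono)
    then show "norm ((F x \<bullet> G x) * \<rho> x) \<le> norm ((g x)\<^sup>2 * \<rho> x)"
      using \<rho>0[of x] by (simp add: abs_mult)
  qed
qed

lemma cont_inner: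
  fixes F G :: "'p::metric_space \<Rightarrow> 'a::euclidean_space \<Rightarrow> 'a" and \<rho> g :: "'a \<Rightarrow> real"
  assumes \<rho>m: "\<rho> \<in> borel_measurable lborel" and \<rho>0: "\<And>x. \<rho> x \<ge> 0"
    and gi: "integrable lborel (\<lambda>x. (g x)\<^sup>2 * \<rho> x)"
    and Fm: "\<And>p. p \<in> S \<Longrightarrow> F p \<in> borel_measurable lborel"
    and Gm: "\<And>p. p \<in> S \<Longrightarrow> G p \<in> borel_measurable lborel"
    and Fb: "\<And>p x. p \<in> S \<Longrightarrow> norm (F p x) \<le> g x"
    and Gb: "\<And>p x. p \<in> S \<Longrightarrow> norm (G p x) \<le> g x"
    and Fc: "\<And>x. continuous_on S (\<lambda>p. F p x)"
    and Gc: "\<And>x. continuous_on S (\<lambda>p. G p x)"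
  shows "continuous_on S (\<lambda>p. LINT x|lborel. (F p x \<bullet> G p x) * \<rho> x)"
proof (rule continuous_on_sequentiallyI)
  fix u a assume u: "\<forall>n. u n \<in> S" and a: "a \<in> S" and ua: "u \<longlonglongrightarrow> a"
  show "(\<lambda>n. LINT x|lborel. (F (u n) x \<bullet> G (u n) x) * \<rho> x) \<longlonglongrightarrow> (LINT x|lborel. (F a x \<bullet> G a x) * \<rho> x)"
  proof (rule integral_dominated_convergence[where w = "\<lambda>x. (g x)\<^sup>2 * \<rho> x"])
    show "(\<lambda>x. (F a x \<bullet> G a x) * \<rho> x) \<in> borel_measurable lborel"
      using Fm[OF a] Gm[OF a] \<rho>m by measurable
    show "(\<lambda>x. (F (u n) x \<bullet> G (u n) x) * \<rho> x) \<in> borel_measurable lborel" for n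
      using Fm[OF u[rule_format]] Gm[OF u[rule_format]] \<rho>m by measurable
    show "integrable lborel (\<lambda>x. (g x)\<^sup>2 * \<rho> x)" by (rule gi)
    show "AE x in lborel. (\<lambda>n. (F (u n) x \<bullet> G (u n) x) * \<rho> x) \<longlonglongrightarrow> (F a x \<bullet> G a x) * \<rho> x"
    proof (intro AE_I2 tendsto_intros)
      fix x
      show "(\<lambda>n. F (u n) x) \<longlonglongrightarrow> F a x"
        using Fc[of x] u a ua unfolding continuous_on_sequentially comp_def by auto
      show "(\<lambda>n. G (u n) x) \<longlonglongrightarrow> G a x"
        using Gc[of x] u a ua unfolding continuous_on_sequentially comp_def by auto
    qed
    show "AE x in lborel. norm ((F (u n) x \<bullet> G (u n) x) * \<rho> x) \<le> (g x)\<^sup>2 * \<rho> x" for n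
    proof (intro AE_I2)
      fix x
      have "\<bar>F (u n) x \<bullet> G (u n) x\<bar> \<le> norm (F (u n) x) * norm (G (u n) x)" by (rule Cauchy_Schwarz_ineq2)
      also have "\<dots> \<le> g x * g x" using Fb[OF u[rule_format], of n x] Gb[OF u[rule_format], of n x]
        by (intro mult_mono) (auto intro: order_trans[OF norm_ge_zero])
      finally have "\<bar>F (u n) x \<bullet> G (u n) x\<bar> * \<rho> x \<le> (g x)\<^sup>2 * \<rho> x"
        using \<rho>0[of x] by (simp add: power2_eq_square mult_right_mono)
      then show "norm ((F (u n) x \<bullet> G (u n) x) * \<rho> x) \<le> (g x)\<^sup>2 * \<rho> x"
        using \<rho>0[of x] by (simp add: abs_mult)
    qed
  qed
qed

lemma inner_bound2:
  fixes a b c d :: "'a::real_inner"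
  assumes "norm a \<le> g" "norm b \<le> g" "norm c \<le> g" "norm d \<le> g"
  shows "\<bar>a \<bullet> b + c \<bullet> d\<bar> \<le> 2 * g\<^sup>2"
proof -
  have g0: "0 \<le> g" using assms(1) norm_ge_zero order_trans by blast
  have "\<bar>a \<bullet> b\<bar> \<le> g * g"
    using Cauchy_Schwarz_ineq2[of a b] mult_mono[OF assms(1,2)] g0 by force
  moreover have "\<bar>c \<bullet> d\<bar> \<le> g * g"
    using Cauchy_Schwarz_ineq2[of c d] mult_mono[OF assms(3,4)] g0 by force
  ultimately show ?thesis by (simp add: power2_eq_square)
qed

lemma deriv_inner:
  fixes F G F' G' :: "real \<Rightarrow> 'a::euclidean_space \<Rightarrow> 'a" and \<rho> g :: "'a \<Rightarrow> real"
  assumes \<rho>m: "\<rho> \<in> borel_measurable lborel" and \<rho>0: "\<And>x. \<rho> x \<ge> 0"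
    and gi: "integrable lborel (\<lambda>x. (g x)\<^sup>2 * \<rho> x)"
    and S: "convex S" and \<sigma>: "\<sigma> \<in> S"
    and Fm: "\<And>p. p \<in> S \<Longrightarrow> F p \<in> borel_measurable lborel"
    and Gm: "\<And>p. p \<in> S \<Longrightarrow> G p \<in> borel_measurable lborel"
    and F'm: "\<And>p. p \<in> S \<Longrightarrow> F' p \<in> borel_measurable lborel"
    and G'm: "\<And>p. p \<in> S \<Longrightarrow> G' p \<in> borel_measurable lborel"
    and Fb: "\<And>p x. p \<in> S \<Longrightarrow> norm (F p x) \<le> g x"
    and Gb: "\<And>p x. p \<in> S \<Longrightarrow> norm (G p x) \<le> g x"
    and F'b: "\<And>p x. p \<in> S \<Longrightarrow> norm (F' p x) \<le> g x"
    and G'b: "\<And>p x. p \<in> S \<Longrightarrow> norm (G' p x) \<le> g x"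
    and Fd: "\<And>p x. p \<in> S \<Longrightarrow> ((\<lambda>y. F y x) has_vector_derivative F' p x) (at p within S)"
    and Gd: "\<And>p x. p \<in> S \<Longrightarrow> ((\<lambda>y. G y x) has_vector_derivative G' p x) (at p within S)"
  shows "((\<lambda>y. LINT x|lborel. (F y x \<bullet> G y x) * \<rho> x) has_real_derivative
           (LINT x|lborel. (F' \<sigma> x \<bullet> G \<sigma> x) * \<rho> x) + (LINT x|lborel. (F \<sigma> x \<bullet> G' \<sigma> x) * \<rho> x))
         (at \<sigma> within S)"
proof -
  define \<Phi> where "\<Phi> y = (LINT x|lborel. (F y x \<bullet> G y x) * \<rho> x)" for y
  have intFG: "integrable lborel (\<lambda>x. (F p x \<bullet> G p x) * \<rho> x)" if "p \<in> S" for p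
    using int_inner[OF \<rho>m \<rho>0 gi Fm Gm Fb Gb] that by blast
  have int1: "integrable lborel (\<lambda>x. (F' \<sigma> x \<bullet> G \<sigma> x) * \<rho> x)"
    using int_inner[OF \<rho>m \<rho>0 gi F'm Gm F'b Gb] \<sigma> by blast
  have int2: "integrable lborel (\<lambda>x. (F \<sigma> x \<bullet> G' \<sigma> x) * \<rho> x)"
    using int_inner[OF \<rho>m \<rho>0 gi Fm G'm Fb G'b] \<sigma> by blast
  have sum: "(LINT x|lborel. (F' \<sigma> x \<bullet> G \<sigma> x) * \<rho> x) + (LINT x|lborel. (F \<sigma> x \<bullet> G' \<sigma> x) * \<rho> x)
     = (LINT x|lborel. (F' \<sigma> x \<bullet> G \<sigma> x + F \<sigma> x \<bullet> G' \<sigma> x) * \<rho> x)"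
    using Bochner_Integration.integral_add[OF int1 int2] by (simp add: distrib_right)
  have phid: "((\<lambda>y. F y x \<bullet> G y x) has_real_derivative (F' p x \<bullet> G p x + F p x \<bullet> G' p x)) (at p within S)"
    if "p \<in> S" for p x using vd_inner[OF Fd[OF that] Gd[OF that]] .
  show ?thesis
    unfolding sum has_field_derivative_iff tendsto_at_iff_sequentially
  proof (intro allI impI)
    fix X :: "nat \<Rightarrow> real" assume X: "\<forall>i. X i \<in> S - {\<sigma>}" and Xl: "X \<longlonglongrightarrow> \<sigma>"
    define q where "q i x = ((F (X i) x \<bullet> G (X i) x - F \<sigma> x \<bullet> G \<sigma> x) / (X i - \<sigma>)) * \<rho> x" for i x
    have XS: "X i \<in> S" for i using X by auto
    have eqi: "(LINT x|lborel. (F (X i) x \<bullet> G (X i) x) * \<rho> x) - (LINT x|lborel. (F \<sigma> x \<bullet> G \<sigma> x) * \<rho> x)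
        = (LINT x|lborel. (F (X i) x \<bullet> G (X i) x) * \<rho> x - (F \<sigma> x \<bullet> G \<sigma> x) * \<rho> x)" for i
      using Bochner_Integration.integral_diff[OF intFG[OF XS[of i]] intFG[OF \<sigma>]] by simp
    have eq: "((\<lambda>y. ((LINT x|lborel. (F y x \<bullet> G y x) * \<rho> x) - (LINT x|lborel. (F \<sigma> x \<bullet> G \<sigma> x) * \<rho> x)) / (y - \<sigma>)) \<circ> X) i
        = (LINT x|lborel. q i x)" for i
      unfolding comp_def eqi q_def
      by (simp add: integral_divide_zero[symmetric] left_diff_distrib del: integral_divide_zero)
    show "((\<lambda>y. ((LINT x|lborel. (F y x \<bullet> G y x) * \<rho> x) - (LINT x|lborel. (F \<sigma> x \<bullet> G \<sigma> x) * \<rho> x)) / (y - \<sigma>)) \<circ> X)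
          \<longlonglongrightarrow> (LINT x|lborel. (F' \<sigma> x \<bullet> G \<sigma> x + F \<sigma> x \<bullet> G' \<sigma> x) * \<rho> x)"
      unfolding eq
    proof (rule integral_dominated_convergence[where w = "\<lambda>x. 2 * ((g x)\<^sup>2 * \<rho> x)"])
      show "(\<lambda>x. (F' \<sigma> x \<bullet> G \<sigma> x + F \<sigma> x \<bullet> G' \<sigma> x) * \<rho> x) \<in> borel_measurable lborel"
        using Fm[OF \<sigma>] Gm[OF \<sigma>] F'm[OF \<sigma>] G'm[OF \<sigma>] \<rho>m by measurable
      show "q i \<in> borel_measurable lborel" for i
        unfolding q_def using Fm[OF \<sigma>] Gm[OF \<sigma>] Fm[OF XS[of i]] Gm[OF XS[of i]] \<rho>m by measurable
      show "integrable lborel (\<lambda>x. 2 * ((g x)\<^sup>2 * \<rho> x))" using gi by simp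
      show "AE x in lborel. (\<lambda>i. q i x) \<longlonglongrightarrow> (F' \<sigma> x \<bullet> G \<sigma> x + F \<sigma> x \<bullet> G' \<sigma> x) * \<rho> x"
      proof (intro AE_I2)
        fix x
        have "((\<lambda>y. (F y x \<bullet> G y x - F \<sigma> x \<bullet> G \<sigma> x) / (y - \<sigma>)) \<longlongrightarrow> (F' \<sigma> x \<bullet> G \<sigma> x + F \<sigma> x \<bullet> G' \<sigma> x)) (at \<sigma> within S)"
          using phid[OF \<sigma>, of x] unfolding has_field_derivative_iff .
        then have "((\<lambda>y. (F y x \<bullet> G y x - F \<sigma> x \<bullet> G \<sigma> x) / (y - \<sigma>)) \<circ> X) \<longlonglongrightarrow> (F' \<sigma> x \<bullet> G \<sigma> x + F \<sigma> x \<bullet> G' \<sigma> x)"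
          using X Xl unfolding tendsto_at_iff_sequentially by blast
        then show "(\<lambda>i. q i x) \<longlonglongrightarrow> (F' \<sigma> x \<bullet> G \<sigma> x + F \<sigma> x \<bullet> G' \<sigma> x) * \<rho> x"
          unfolding q_def comp_def by (intro tendsto_mult tendsto_const)
      qed
      show "AE x in lborel. norm (q i x) \<le> 2 * ((g x)\<^sup>2 * \<rho> x)" for i
      proof (intro AE_I2)
        fix x
        have "norm ((F (X i) x \<bullet> G (X i) x) - (F \<sigma> x \<bullet> G \<sigma> x)) \<le> (2 * (g x)\<^sup>2) * norm (X i - \<sigma>)"
        proof (rule field_differentiable_bound[OF S])
          show "((\<lambda>y. F y x \<bullet> G y x) has_field_derivative (F' z x \<bullet> G z x + F z x \<bullet> G' z x)) (at z within S)"
            if "z \<in> S" for z using phid[OF that] .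
          show "norm (F' z x \<bullet> G z x + F z x \<bullet> G' z x) \<le> 2 * (g x)\<^sup>2" if "z \<in> S" for z
            using inner_bound2[OF F'b[OF that] Gb[OF that] Fb[OF that] G'b[OF that]] by simp
        qed (use XS \<sigma> in auto)
        moreover have "X i \<noteq> \<sigma>" using X by auto
        ultimately have "\<bar>(F (X i) x \<bullet> G (X i) x - F \<sigma> x \<bullet> G \<sigma> x) / (X i - \<sigma>)\<bar> \<le> 2 * (g x)\<^sup>2"
          by (simp add: divide_le_eq abs_divide)
        then show "norm (q i x) \<le> 2 * ((g x)\<^sup>2 * \<rho> x)"
        proof -
          have "norm (q i x) = \<bar>(F (X i) x \<bullet> G (X i) x - F \<sigma> x \<bullet> G \<sigma> x) / (X i - \<sigma>)\<bar> * \<rho> x"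
            unfolding q_def using \<rho>0[of x] by (simp add: abs_mult)
          also have "\<dots> \<le> 2 * (g x)\<^sup>2 * \<rho> x" by (rule mult_right_mono[OF \<open>\<bar>(F (X i) x \<bullet> G (X i) x - F \<sigma> x \<bullet> G \<sigma> x) / (X i - \<sigma>)\<bar> \<le> 2 * (g x)\<^sup>2\<close> \<rho>0])
          finally show ?thesis by simp
        qed
      qed
    qed
  qed
qed

lemma unit_sq_cbox: "unit_sq = cbox (0,0) (1::real,1::real)"
  unfolding unit_sq_def by (simp add: cbox_Pair_eq)

lemma C1_pd_s:
  assumes "C1_param F Fs Ft" "t \<in> {0..1}" "\<sigma> \<in> {0..1}"
  shows "((\<lambda>\<sigma>. F \<sigma> t x) has_vector_derivative Fs \<sigma> t x) (at \<sigma> within {0..1})"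
proof -
  have d: "\<And>p. p \<in> unit_sq \<Longrightarrow> ((\<lambda>q. F (fst q) (snd q) x) has_derivative
               (\<lambda>h. fst h *\<^sub>R Fs (fst p) (snd p) x + snd h *\<^sub>R Ft (fst p) (snd p) x))
            (at p within unit_sq)"
    using assms(1) unfolding C1_param_def by blast
  have "((\<lambda>y. (\<lambda>q. F (fst q) (snd q) x) ((\<lambda>y. (y, t)) y)) has_derivative
       (\<lambda>h. fst ((h, 0::real)) *\<^sub>R Fs (fst (\<sigma>, t)) (snd (\<sigma>, t)) x + snd ((h, 0::real)) *\<^sub>R Ft (fst (\<sigma>, t)) (snd (\<sigma>, t)) x))
     (at \<sigma> within {0..1})"
    by (rule has_derivative_in_compose2[OF d, of "\<lambda>y. (y, t)" "{0..1}" \<sigma> "\<lambda>h. (h, 0)"])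
       (use assms in \<open>auto simp: unit_sq_def intro!: derivative_eq_intros\<close>)
  then show ?thesis unfolding has_vector_derivative_def by simp
qed

lemma C1_pd_t:
  assumes "C1_param F Fs Ft" "s \<in> {0..1}" "\<tau> \<in> {0..1}"
  shows "((\<lambda>\<tau>. F s \<tau> x) has_vector_derivative Ft s \<tau> x) (at \<tau> within {0..1})"
proof -
  have d: "\<And>p. p \<in> unit_sq \<Longrightarrow> ((\<lambda>q. F (fst q) (snd q) x) has_derivative
               (\<lambda>h. fst h *\<^sub>R Fs (fst p) (snd p) x + snd h *\<^sub>R Ft (fst p) (snd p) x))
            (at p within unit_sq)"
    using assms(1) unfolding C1_param_def by blast
  have "((\<lambda>y. (\<lambda>q. F (fst q) (snd q) x) ((\<lambda>y. (s, y)) y)) has_derivative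
       (\<lambda>h. fst ((0::real, h)) *\<^sub>R Fs (fst (s, \<tau>)) (snd (s, \<tau>)) x + snd ((0::real, h)) *\<^sub>R Ft (fst (s, \<tau>)) (snd (s, \<tau>)) x))
     (at \<tau> within {0..1})"
    by (rule has_derivative_in_compose2[OF d, of "\<lambda>y. (s, y)" "{0..1}" \<tau> "\<lambda>h. (0, h)"])
       (use assms in \<open>auto simp: unit_sq_def intro!: derivative_eq_intros\<close>)
  then show ?thesis unfolding has_vector_derivative_def by simp
qed

lemma C1_cont:
  assumes "C1_param F Fs Ft"
  shows "continuous_on unit_sq (\<lambda>q. F (fst q) (snd q) x)"
    "continuous_on unit_sq (\<lambda>q. Fs (fst q) (snd q) x)"
    "continuous_on unit_sq (\<lambda>q. Ft (fst q) (snd q) x)"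
proof -
  show "continuous_on unit_sq (\<lambda>q. F (fst q) (snd q) x)"
    using assms unfolding C1_param_def by (intro has_derivative_continuous_on) blast
qed (use assms in \<open>auto simp: C1_param_def\<close>)

definition J :: "(real \<times> real \<Rightarrow> real) \<Rightarrow> real" where
  "J f = integral (cbox (0,0) (1,1)) f"

lemma J_iter_st:
  fixes f :: "real \<times> real \<Rightarrow> real"
  assumes "continuous_on unit_sq f"
  shows "J f = integral {0..1} (\<lambda>s. integral {0..1} (\<lambda>t. f (s, t)))"
  using integral_prod_continuous[of 0 0 1 1 f] assms unfolding J_def unit_sq_cbox
  by (simp add: cbox_interval)

lemma J_iter_ts:
  fixes f :: "real \<times> real \<Rightarrow> real"
  assumes "continuous_on unit_sq f"
  shows "J f = integral {0..1} (\<lambda>t. integral {0..1} (\<lambda>s. f (s, t)))"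
proof -
  have "J f = integral {0..1} (\<lambda>s. integral {0..1} (\<lambda>t. f (s, t)))" by (rule J_iter_st[OF assms])
  also have "\<dots> = integral (cbox 0 1) (\<lambda>s. integral (cbox 0 1) (\<lambda>t. (\<lambda>s t. f (s, t)) s t))"
    by (simp add: cbox_interval)
  also have "\<dots> = integral (cbox 0 1) (\<lambda>t. integral (cbox 0 1) (\<lambda>s. (\<lambda>s t. f (s, t)) s t))"
    by (rule integral_swap_continuous) (use assms in \<open>simp add: unit_sq_cbox case_prod_unfold\<close>)
  finally show ?thesis by (simp add: cbox_interval)
qed

lemma J_integrable:
  fixes f :: "real \<times> real \<Rightarrow> real"
  assumes "continuous_on unit_sq f"
  shows "f integrable_on cbox (0,0) (1,1)"
  using assms unfolding unit_sq_cbox by (rule Henstock_Kurzweil_Integration.integrable_continuous)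

lemma J_add:
  fixes f g :: "real \<times> real \<Rightarrow> real"
  assumes "continuous_on unit_sq f" "continuous_on unit_sq g"
  shows "J (\<lambda>q. f q + g q) = J f + J g"
  unfolding J_def by (rule integral_add[OF J_integrable[OF assms(1)] J_integrable[OF assms(2)]])

lemma J_diff:
  fixes f g :: "real \<times> real \<Rightarrow> real"
  assumes "continuous_on unit_sq f" "continuous_on unit_sq g"
  shows "J (\<lambda>q. f q - g q) = J f - J g"
  unfolding J_def by (rule integral_diff[OF J_integrable[OF assms(1)] J_integrable[OF assms(2)]])

lemma J_uminus: "J (\<lambda>q. - f q) = - J f"
  unfolding J_def by (rule integral_neg)

lemma ibp_1d:
  fixes k f k' f' :: "real \<Rightarrow> real"
  assumes kd: "\<And>\<sigma>. \<sigma> \<in> {0..1} \<Longrightarrow> (k has_real_derivative k' \<sigma>) (at \<sigma> within {0..1})"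
    and fd: "\<And>\<sigma>. \<sigma> \<in> {0..1} \<Longrightarrow> (f has_real_derivative f' \<sigma>) (at \<sigma> within {0..1})"
    and f0: "f 0 = 0" and f1: "f 1 = 0"
    and c1: "continuous_on {0..1} k'" and c2: "continuous_on {0..1} f"
  shows "integral {0..1} (\<lambda>\<sigma>. k \<sigma> * f' \<sigma>) = - integral {0..1} (\<lambda>\<sigma>. k' \<sigma> * f \<sigma>)"
proof -
  have "((\<lambda>\<sigma>. k' \<sigma> * f \<sigma> + k \<sigma> * f' \<sigma>) has_integral (k 1 * f 1 - k 0 * f 0)) {0..1}"
    by (rule fundamental_theorem_of_calculus)
       (auto intro!: derivative_eq_intros kd fd simp: has_real_derivative_iff_has_vector_derivative[symmetric] algebra_simps)
  then have hi: "((\<lambda>\<sigma>. k' \<sigma> * f \<sigma> + k \<sigma> * f' \<sigma>) has_integral 0) {0..1}" using f0 f1 by simp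
  have i1: "(\<lambda>\<sigma>. k' \<sigma> * f \<sigma>) integrable_on {0..1}"
    by (rule integrable_continuous_interval) (intro continuous_intros c1 c2)
  have i2: "(\<lambda>\<sigma>. k \<sigma> * f' \<sigma>) integrable_on {0..1}"
  proof -
    have "(\<lambda>\<sigma>. (k' \<sigma> * f \<sigma> + k \<sigma> * f' \<sigma>) - k' \<sigma> * f \<sigma>) integrable_on {0..1}"
      using hi i1 by (intro integrable_diff) (auto simp: has_integral_integrable)
    then show ?thesis by simp
  qed
  have "integral {0..1} (\<lambda>\<sigma>. k' \<sigma> * f \<sigma> + k \<sigma> * f' \<sigma>) = 0" using hi by (rule integral_unique)
  then show ?thesis using integral_add[OF i1 i2] by simp
qed

lemma ibp_s:
  fixes k f ks fs :: "real \<times> real \<Rightarrow> real"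
  assumes kd: "\<And>\<sigma> t. \<sigma> \<in> {0..1} \<Longrightarrow> t \<in> {0..1} \<Longrightarrow> ((\<lambda>\<sigma>. k (\<sigma>, t)) has_real_derivative ks (\<sigma>, t)) (at \<sigma> within {0..1})"
    and fd: "\<And>\<sigma> t. \<sigma> \<in> {0..1} \<Longrightarrow> t \<in> {0..1} \<Longrightarrow> ((\<lambda>\<sigma>. f (\<sigma>, t)) has_real_derivative fs (\<sigma>, t)) (at \<sigma> within {0..1})"
    and f0: "\<And>t. t \<in> {0..1} \<Longrightarrow> f (0, t) = 0" and f1: "\<And>t. t \<in> {0..1} \<Longrightarrow> f (1, t) = 0"
    and ck: "continuous_on unit_sq k" and cks: "continuous_on unit_sq ks"
    and cf: "continuous_on unit_sq f" and cfs: "continuous_on unit_sq fs"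
  shows "J (\<lambda>q. k q * fs q) = - J (\<lambda>q. ks q * f q)"
proof -
  have sub: "(\<lambda>\<sigma>. (\<sigma>, t)) ` {0..1} \<subseteq> unit_sq" if "t \<in> {0..1}" for t using that by (auto simp: unit_sq_def)
  have cc: "continuous_on {0..1} (\<lambda>\<sigma>. h (\<sigma>, t))" if "continuous_on unit_sq h" "t \<in> {0..1}" for h t
    by (rule continuous_on_compose2[OF that(1)]) (use sub[OF that(2)] in \<open>auto intro!: continuous_intros\<close>)
  have "J (\<lambda>q. k q * fs q) = integral {0..1} (\<lambda>t. integral {0..1} (\<lambda>s. k (s, t) * fs (s, t)))"
    by (rule J_iter_ts) (intro continuous_intros ck cfs)
  also have "\<dots> = integral {0..1} (\<lambda>t. - integral {0..1} (\<lambda>s. ks (s, t) * f (s, t)))"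
    by (rule integral_cong, rule ibp_1d[where k = "\<lambda>\<sigma>. k (\<sigma>, _)" and f = "\<lambda>\<sigma>. f (\<sigma>, _)"])
       (auto intro!: kd fd f0 f1 cc cks cf)
  also have "\<dots> = - J (\<lambda>q. ks q * f q)"
    by (subst J_iter_ts) (auto intro!: continuous_intros cks cf simp: integral_neg)
  finally show ?thesis .
qed

lemma ibp_t:
  fixes k f kt ft :: "real \<times> real \<Rightarrow> real"
  assumes kd: "\<And>\<tau> s. \<tau> \<in> {0..1} \<Longrightarrow> s \<in> {0..1} \<Longrightarrow> ((\<lambda>\<tau>. k (s, \<tau>)) has_real_derivative kt (s, \<tau>)) (at \<tau> within {0..1})"
    and fd: "\<And>\<tau> s. \<tau> \<in> {0..1} \<Longrightarrow> s \<in> {0..1} \<Longrightarrow> ((\<lambda>\<tau>. f (s, \<tau>)) has_real_derivative ft (s, \<tau>)) (at \<tau> within {0..1})"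
    and f0: "\<And>s. s \<in> {0..1} \<Longrightarrow> f (s, 0) = 0" and f1: "\<And>s. s \<in> {0..1} \<Longrightarrow> f (s, 1) = 0"
    and ck: "continuous_on unit_sq k" and ckt: "continuous_on unit_sq kt"
    and cf: "continuous_on unit_sq f" and cft: "continuous_on unit_sq ft"
  shows "J (\<lambda>q. k q * ft q) = - J (\<lambda>q. kt q * f q)"
proof -
  have sub: "(\<lambda>\<tau>. (s, \<tau>)) ` {0..1} \<subseteq> unit_sq" if "s \<in> {0..1}" for s using that by (auto simp: unit_sq_def)
  have cc: "continuous_on {0..1} (\<lambda>\<tau>. h (s, \<tau>))" if "continuous_on unit_sq h" "s \<in> {0..1}" for h s
    by (rule continuous_on_compose2[OF that(1)]) (use sub[OF that(2)] in \<open>auto intro!: continuous_intros\<close>)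
  have "J (\<lambda>q. k q * ft q) = integral {0..1} (\<lambda>s. integral {0..1} (\<lambda>t. k (s, t) * ft (s, t)))"
    by (rule J_iter_st) (intro continuous_intros ck cft)
  also have "\<dots> = integral {0..1} (\<lambda>s. - integral {0..1} (\<lambda>t. kt (s, t) * f (s, t)))"
    by (rule integral_cong, rule ibp_1d[where k = "\<lambda>\<tau>. k (_, \<tau>)" and f = "\<lambda>\<tau>. f (_, \<tau>)"])
       (auto intro!: kd fd f0 f1 cc ckt cf)
  also have "\<dots> = - J (\<lambda>q. kt q * f q)"
    by (subst J_iter_st) (auto intro!: continuous_intros ckt cf simp: integral_neg)
  finally show ?thesis .
qed

lemma quot_deriv:
  fixes a b c n :: "real \<Rightarrow> real"
  assumes "(a has_real_derivative a') (at x within S)" "(b has_real_derivative b') (at x within S)"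
    "(c has_real_derivative c') (at x within S)" "(n has_real_derivative n') (at x within S)"
    and pos: "a x * b x - (c x)\<^sup>2 > 0"
  shows "((\<lambda>y. n y / sqrt (a y * b y - (c y)\<^sup>2)) has_real_derivative
     ((n' * sqrt (a x * b x - (c x)\<^sup>2) - n x * ((a' * b x + a x * b' - 2 * c x * c') / (2 * sqrt (a x * b x - (c x)\<^sup>2))))
       / (sqrt (a x * b x - (c x)\<^sup>2))\<^sup>2)) (at x within S)"
proof -
  let ?d = "a x * b x - (c x)\<^sup>2"
  have dd: "((\<lambda>y. a y * b y - (c y)\<^sup>2) has_real_derivative (a' * b x + a x * b' - 2 * c x * c')) (at x within S)"
    using DERIV_diff[OF DERIV_mult[OF assms(1,2)] DERIV_mult[OF assms(3,3)]]
    by (simp add: power2_eq_square algebra_simps)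
  have sq: "((\<lambda>y. sqrt (a y * b y - (c y)\<^sup>2)) has_real_derivative
      ((a' * b x + a x * b' - 2 * c x * c') / (2 * sqrt ?d))) (at x within S)"
    using DERIV_chain2[OF DERIV_real_sqrt[OF pos] dd] by (simp add: field_simps)
  have "sqrt ?d \<noteq> 0" using pos by simp
  from DERIV_quotient[OF assms(4) sq this] show ?thesis
    by (simp add: power2_eq_square algebra_simps)
qed


locale setting =
  fixes \<rho> :: "'a::euclidean_space \<Rightarrow> real" and g :: "'a \<Rightarrow> real"
    and Ts Tt Tss Tst Tts Ttt :: "real \<Rightarrow> real \<Rightarrow> 'a \<Rightarrow> 'a"
  assumes \<rho>m: "\<rho> \<in> borel_measurable lborel" and \<rho>0: "\<And>x. \<rho> x \<ge> 0"
    and gi: "integrable lborel (\<lambda>x. (g x)\<^sup>2 * \<rho> x)"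
    and Ts_C1: "C1_param Ts Tss Tst" and Tt_C1: "C1_param Tt Tts Ttt"
    and Tgood: "\<And>F. F \<in> {Ts, Tt, Tss, Tst, Tts, Ttt} \<Longrightarrow> s \<in> {0..1} \<Longrightarrow> t \<in> {0..1} \<Longrightarrow>
         F s t \<in> borel_measurable lborel \<and> (\<forall>x. norm (F s t x) \<le> g x)"
    and Dpos: "\<And>s t. s \<in> {0..1} \<Longrightarrow> t \<in> {0..1} \<Longrightarrow> Dfun \<rho> Ts Tt s t > 0"
begin

definition good :: "(real \<Rightarrow> real \<Rightarrow> 'a \<Rightarrow> 'a) \<Rightarrow> bool" where
  "good F \<longleftrightarrow> (\<forall>s\<in>{0..1}. \<forall>t\<in>{0..1}. F s t \<in> borel_measurable lborel \<and> (\<forall>x. norm (F s t x) \<le> g x))"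

definition cts :: "(real \<Rightarrow> real \<Rightarrow> 'a \<Rightarrow> 'a) \<Rightarrow> bool" where
  "cts F \<longleftrightarrow> (\<forall>x. continuous_on unit_sq (\<lambda>q. F (fst q) (snd q) x))"

definition wi :: "(real \<Rightarrow> real \<Rightarrow> 'a \<Rightarrow> 'a) \<Rightarrow> (real \<Rightarrow> real \<Rightarrow> 'a \<Rightarrow> 'a) \<Rightarrow> real \<Rightarrow> real \<Rightarrow> real" where
  "wi F G s t = wint \<rho> (\<lambda>x. F s t x \<bullet> G s t x)"

lemma goodT: "good Ts" "good Tt" "good Tss" "good Tst" "good Tts" "good Ttt"
  unfolding good_def using Tgood by auto

lemma ctsT: "cts Ts" "cts Tt" "cts Tss" "cts Tst" "cts Tts" "cts Ttt"
  unfolding cts_def using C1_cont[OF Ts_C1] C1_cont[OF Tt_C1] by auto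

lemma wi_comm: "wi F G s t = wi G F s t"
  unfolding wi_def by (simp add: inner_commute)

lemma wi_int:
  assumes "good F" "good G" "s \<in> {0..1}" "t \<in> {0..1}"
  shows "integrable lborel (\<lambda>x. (F s t x \<bullet> G s t x) * \<rho> x)"
  using assms unfolding good_def by (intro int_inner[OF \<rho>m \<rho>0 gi]) auto

lemma wi_cont:
  assumes "good F" "good G" "cts F" "cts G"
  shows "continuous_on unit_sq (\<lambda>q. wi F G (fst q) (snd q))"
  unfolding wi_def wint_def
  by (rule cont_inner[OF \<rho>m \<rho>0 gi, where F = "\<lambda>q. F (fst q) (snd q)" and G = "\<lambda>q. G (fst q) (snd q)"])
     (use assms in \<open>auto simp: good_def cts_def unit_sq_def\<close>)

lemma wi_ds:
  assumes "good F" "good G" "good F'" "good G'"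
    and Fd: "\<And>\<sigma> t x. \<sigma> \<in> {0..1} \<Longrightarrow> t \<in> {0..1} \<Longrightarrow> ((\<lambda>\<sigma>. F \<sigma> t x) has_vector_derivative F' \<sigma> t x) (at \<sigma> within {0..1})"
    and Gd: "\<And>\<sigma> t x. \<sigma> \<in> {0..1} \<Longrightarrow> t \<in> {0..1} \<Longrightarrow> ((\<lambda>\<sigma>. G \<sigma> t x) has_vector_derivative G' \<sigma> t x) (at \<sigma> within {0..1})"
    and st: "\<sigma> \<in> {0..1}" "t \<in> {0..1}"
  shows "((\<lambda>\<sigma>. wi F G \<sigma> t) has_real_derivative (wi F' G \<sigma> t + wi F G' \<sigma> t)) (at \<sigma> within {0..1})"
  unfolding wi_def wint_def
  by (rule deriv_inner[OF \<rho>m \<rho>0 gi, where F = "\<lambda>\<sigma>. F \<sigma> t" and G = "\<lambda>\<sigma>. G \<sigma> t"])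
     (use assms in \<open>auto simp: good_def\<close>)

lemma wi_dt:
  assumes "good F" "good G" "good F'" "good G'"
    and Fd: "\<And>\<tau> s x. \<tau> \<in> {0..1} \<Longrightarrow> s \<in> {0..1} \<Longrightarrow> ((\<lambda>\<tau>. F s \<tau> x) has_vector_derivative F' s \<tau> x) (at \<tau> within {0..1})"
    and Gd: "\<And>\<tau> s x. \<tau> \<in> {0..1} \<Longrightarrow> s \<in> {0..1} \<Longrightarrow> ((\<lambda>\<tau>. G s \<tau> x) has_vector_derivative G' s \<tau> x) (at \<tau> within {0..1})"
    and st: "s \<in> {0..1}" "\<tau> \<in> {0..1}"
  shows "((\<lambda>\<tau>. wi F G s \<tau>) has_real_derivative (wi F' G s \<tau> + wi F G' s \<tau>)) (at \<tau> within {0..1})"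
  unfolding wi_def wint_def
  by (rule deriv_inner[OF \<rho>m \<rho>0 gi, where F = "\<lambda>\<tau>. F s \<tau>" and G = "\<lambda>\<tau>. G s \<tau>"])
     (use assms in \<open>auto simp: good_def\<close>)

lemma Ts_ds: "\<sigma> \<in> {0..1} \<Longrightarrow> t \<in> {0..1} \<Longrightarrow> ((\<lambda>\<sigma>. Ts \<sigma> t x) has_vector_derivative Tss \<sigma> t x) (at \<sigma> within {0..1})"
  by (rule C1_pd_s[OF Ts_C1])
lemma Tt_ds: "\<sigma> \<in> {0..1} \<Longrightarrow> t \<in> {0..1} \<Longrightarrow> ((\<lambda>\<sigma>. Tt \<sigma> t x) has_vector_derivative Tts \<sigma> t x) (at \<sigma> within {0..1})"
  by (rule C1_pd_s[OF Tt_C1])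
lemma Ts_dt: "\<tau> \<in> {0..1} \<Longrightarrow> s \<in> {0..1} \<Longrightarrow> ((\<lambda>\<tau>. Ts s \<tau> x) has_vector_derivative Tst s \<tau> x) (at \<tau> within {0..1})"
  by (rule C1_pd_t[OF Ts_C1])
lemma Tt_dt: "\<tau> \<in> {0..1} \<Longrightarrow> s \<in> {0..1} \<Longrightarrow> ((\<lambda>\<tau>. Tt s \<tau> x) has_vector_derivative Ttt s \<tau> x) (at \<tau> within {0..1})"
  by (rule C1_pd_t[OF Tt_C1])

definition "A = wi Ts Ts"
definition "B = wi Tt Tt"
definition "C = wi Ts Tt"
definition "As s t = wi Tss Ts s t + wi Ts Tss s t"
definition "Bs s t = wi Tts Tt s t + wi Tt Tts s t"
definition "Cs s t = wi Tss Tt s t + wi Ts Tts s t"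
definition "At s t = wi Tst Ts s t + wi Ts Tst s t"
definition "Bt s t = wi Ttt Tt s t + wi Tt Ttt s t"
definition "Ct s t = wi Tst Tt s t + wi Ts Ttt s t"
definition "Dd s t = sqrt (A s t * B s t - (C s t)\<^sup>2)"
definition "Dds s t = (As s t * B s t + A s t * Bs s t - 2 * C s t * Cs s t) / (2 * Dd s t)"
definition "Ddt s t = (At s t * B s t + A s t * Bt s t - 2 * C s t * Ct s t) / (2 * Dd s t)"
definition "qs N Ns s t = (Ns s t * Dd s t - N s t * Dds s t) / (Dd s t)\<^sup>2"
definition "qt N Nt s t = (Nt s t * Dd s t - N s t * Ddt s t) / (Dd s t)\<^sup>2"

lemma Dfun_eq: "Dfun \<rho> Ts Tt s t = Dd s t"
  unfolding Dfun_def Dd_def A_def B_def C_def wi_def by (simp add: power2_norm_eq_inner)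

lemma Dd_pos: "s \<in> {0..1} \<Longrightarrow> t \<in> {0..1} \<Longrightarrow> Dd s t > 0"
  using Dpos Dfun_eq by simp

lemma DD_pos: "s \<in> {0..1} \<Longrightarrow> t \<in> {0..1} \<Longrightarrow> A s t * B s t - (C s t)\<^sup>2 > 0"
  using Dd_pos[of s t] unfolding Dd_def by simp

lemma A_ds: "\<sigma> \<in> {0..1} \<Longrightarrow> t \<in> {0..1} \<Longrightarrow> ((\<lambda>\<sigma>. A \<sigma> t) has_real_derivative As \<sigma> t) (at \<sigma> within {0..1})"
  unfolding A_def As_def by (rule wi_ds) (auto intro: goodT Ts_ds)
lemma B_ds: "\<sigma> \<in> {0..1} \<Longrightarrow> t \<in> {0..1} \<Longrightarrow> ((\<lambda>\<sigma>. B \<sigma> t) has_real_derivative Bs \<sigma> t) (at \<sigma> within {0..1})"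
  unfolding B_def Bs_def by (rule wi_ds) (auto intro: goodT Tt_ds)
lemma C_ds: "\<sigma> \<in> {0..1} \<Longrightarrow> t \<in> {0..1} \<Longrightarrow> ((\<lambda>\<sigma>. C \<sigma> t) has_real_derivative Cs \<sigma> t) (at \<sigma> within {0..1})"
  unfolding C_def Cs_def by (rule wi_ds) (auto intro: goodT Ts_ds Tt_ds)
lemma A_dt: "\<tau> \<in> {0..1} \<Longrightarrow> s \<in> {0..1} \<Longrightarrow> ((\<lambda>\<tau>. A s \<tau>) has_real_derivative At s \<tau>) (at \<tau> within {0..1})"
  unfolding A_def At_def by (rule wi_dt) (auto intro: goodT Ts_dt)
lemma B_dt: "\<tau> \<in> {0..1} \<Longrightarrow> s \<in> {0..1} \<Longrightarrow> ((\<lambda>\<tau>. B s \<tau>) has_real_derivative Bt s \<tau>) (at \<tau> within {0..1})"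
  unfolding B_def Bt_def by (rule wi_dt) (auto intro: goodT Tt_dt)
lemma C_dt: "\<tau> \<in> {0..1} \<Longrightarrow> s \<in> {0..1} \<Longrightarrow> ((\<lambda>\<tau>. C s \<tau>) has_real_derivative Ct s \<tau>) (at \<tau> within {0..1})"
  unfolding C_def Ct_def by (rule wi_dt) (auto intro: goodT Ts_dt Tt_dt)

lemma qs_deriv:
  assumes "\<And>\<sigma>. \<sigma> \<in> {0..1} \<Longrightarrow> ((\<lambda>\<sigma>. N \<sigma> t) has_real_derivative Ns \<sigma> t) (at \<sigma> within {0..1})"
    and "\<sigma> \<in> {0..1}" "t \<in> {0..1}"
  shows "((\<lambda>\<sigma>. N \<sigma> t / Dd \<sigma> t) has_real_derivative qs N Ns \<sigma> t) (at \<sigma> within {0..1})"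
  unfolding Dd_def qs_def Dds_def
  by (rule quot_deriv[OF A_ds B_ds C_ds assms(1) DD_pos]) (use assms in auto)

lemma qt_deriv:
  assumes "\<And>\<tau>. \<tau> \<in> {0..1} \<Longrightarrow> ((\<lambda>\<tau>. N s \<tau>) has_real_derivative Nt s \<tau>) (at \<tau> within {0..1})"
    and "\<tau> \<in> {0..1}" "s \<in> {0..1}"
  shows "((\<lambda>\<tau>. N s \<tau> / Dd s \<tau>) has_real_derivative qt N Nt s \<tau>) (at \<tau> within {0..1})"
  unfolding Dd_def qt_def Ddt_def
  by (rule quot_deriv[OF A_dt B_dt C_dt assms(1) DD_pos]) (use assms in auto)

end


lemma vd_at01:
  assumes "(f has_vector_derivative f') (at x within {0..1})" "x \<in> {0<..<1::real}"
  shows "vector_derivative f (at x) = f'"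
proof -
  have "(f has_vector_derivative f') (at x within {0<..<1})"
    by (rule has_vector_derivative_within_subset[OF assms(1)]) auto
  then have "(f has_vector_derivative f') (at x)"
    using assms(2) at_within_open[of x "{0<..<1::real}"] by simp
  then show ?thesis by (rule vector_derivative_at)
qed


context setting
begin

lemma sq_mem: "q \<in> unit_sq \<Longrightarrow> fst q \<in> {0..1} \<and> snd q \<in> {0..1}"
  unfolding unit_sq_def by auto

lemma cA: "continuous_on unit_sq (\<lambda>q. A (fst q) (snd q))"
  unfolding A_def by (rule wi_cont; rule goodT ctsT)
lemma cB: "continuous_on unit_sq (\<lambda>q. B (fst q) (snd q))"
  unfolding B_def by (rule wi_cont; rule goodT ctsT)
lemma cC: "continuous_on unit_sq (\<lambda>q. C (fst q) (snd q))"
  unfolding C_def by (rule wi_cont; rule goodT ctsT)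
lemma cAs: "continuous_on unit_sq (\<lambda>q. As (fst q) (snd q))"
  unfolding As_def by (rule continuous_on_add; rule wi_cont; rule goodT ctsT)
lemma cBs: "continuous_on unit_sq (\<lambda>q. Bs (fst q) (snd q))"
  unfolding Bs_def by (rule continuous_on_add; rule wi_cont; rule goodT ctsT)
lemma cCs: "continuous_on unit_sq (\<lambda>q. Cs (fst q) (snd q))"
  unfolding Cs_def by (rule continuous_on_add; rule wi_cont; rule goodT ctsT)
lemma cAt: "continuous_on unit_sq (\<lambda>q. At (fst q) (snd q))"
  unfolding At_def by (rule continuous_on_add; rule wi_cont; rule goodT ctsT)
lemma cBt: "continuous_on unit_sq (\<lambda>q. Bt (fst q) (snd q))"
  unfolding Bt_def by (rule continuous_on_add; rule wi_cont; rule goodT ctsT)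
lemma cCt: "continuous_on unit_sq (\<lambda>q. Ct (fst q) (snd q))"
  unfolding Ct_def by (rule continuous_on_add; rule wi_cont; rule goodT ctsT)
lemmas cint = continuous_on_add continuous_on_diff continuous_on_mult continuous_on_divide
  continuous_on_power continuous_on_const continuous_on_real_sqrt continuous_on_minus

lemma cDd: "continuous_on unit_sq (\<lambda>q. Dd (fst q) (snd q))"
  unfolding Dd_def by (intro cint cA cB cC)
lemma Dd_nz: "q \<in> unit_sq \<Longrightarrow> Dd (fst q) (snd q) \<noteq> 0"
  by (metis Dd_pos sq_mem less_irrefl)
lemma cDds: "continuous_on unit_sq (\<lambda>q. Dds (fst q) (snd q))"
  unfolding Dds_def by (intro cint cA cB cC cAs cBs cCs cDd) (auto simp: Dd_nz)
lemma cDdt: "continuous_on unit_sq (\<lambda>q. Ddt (fst q) (snd q))"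
  unfolding Ddt_def by (intro cint cA cB cC cAt cBt cCt cDd) (auto simp: Dd_nz)
lemma cqs:
  assumes "continuous_on unit_sq (\<lambda>q. N (fst q) (snd q))" "continuous_on unit_sq (\<lambda>q. Ns (fst q) (snd q))"
  shows "continuous_on unit_sq (\<lambda>q. qs N Ns (fst q) (snd q))"
  unfolding qs_def by (intro cint assms cDd cDds) (auto simp: Dd_nz)
lemma cqt:
  assumes "continuous_on unit_sq (\<lambda>q. N (fst q) (snd q))" "continuous_on unit_sq (\<lambda>q. Nt (fst q) (snd q))"
  shows "continuous_on unit_sq (\<lambda>q. qt N Nt (fst q) (snd q))"
  unfolding qt_def by (intro cint assms cDd cDdt) (auto simp: Dd_nz)
lemma cdiv:
  assumes "continuous_on unit_sq (\<lambda>q. N (fst q) (snd q))"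
  shows "continuous_on unit_sq (\<lambda>q. N (fst q) (snd q) / Dd (fst q) (snd q))"
  by (intro cint assms cDd) (auto simp: Dd_nz)


definition ELp :: "real \<Rightarrow> real \<Rightarrow> 'a \<Rightarrow> 'a" where
  "ELp s t x = qs B Bs s t *\<^sub>R Ts s t x + (B s t / Dd s t) *\<^sub>R Tss s t x
     + (qt A At s t *\<^sub>R Tt s t x + (A s t / Dd s t) *\<^sub>R Ttt s t x)
     - (qt C Ct s t *\<^sub>R Ts s t x + (C s t / Dd s t) *\<^sub>R Tst s t x)
     - (qs C Cs s t *\<^sub>R Tt s t x + (C s t / Dd s t) *\<^sub>R Tts s t x)"

lemma EL_eq:
  assumes s: "s \<in> {0<..<1}" and t: "t \<in> {0<..<1}"
  shows "EL_lhs \<rho> Ts Tt s t x = ELp s t x"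
proof -
  have s1: "s \<in> {0..1}" and t1: "t \<in> {0..1}" using s t by auto
  have nB: "wint \<rho> (\<lambda>y. (norm (Tt \<sigma> \<tau> y))\<^sup>2) = B \<sigma> \<tau>" for \<sigma> \<tau>
    unfolding B_def wi_def by (simp add: power2_norm_eq_inner)
  have nA: "wint \<rho> (\<lambda>y. (norm (Ts \<sigma> \<tau> y))\<^sup>2) = A \<sigma> \<tau>" for \<sigma> \<tau>
    unfolding A_def wi_def by (simp add: power2_norm_eq_inner)
  have nC: "wint \<rho> (\<lambda>y. Ts \<sigma> \<tau> y \<bullet> Tt \<sigma> \<tau> y) = C \<sigma> \<tau>" for \<sigma> \<tau>
    unfolding C_def wi_def by simp
  have 1: "vector_derivative (\<lambda>\<sigma>. (B \<sigma> t / Dd \<sigma> t) *\<^sub>R Ts \<sigma> t x) (at s)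
        = (B s t / Dd s t) *\<^sub>R Tss s t x + qs B Bs s t *\<^sub>R Ts s t x"
    by (rule vd_at01[OF has_vector_derivative_scaleR[OF qs_deriv[OF B_ds] Ts_ds] s]) (use s1 t1 in auto)
  have 2: "vector_derivative (\<lambda>\<tau>. (A s \<tau> / Dd s \<tau>) *\<^sub>R Tt s \<tau> x) (at t)
        = (A s t / Dd s t) *\<^sub>R Ttt s t x + qt A At s t *\<^sub>R Tt s t x"
    by (rule vd_at01[OF has_vector_derivative_scaleR[OF qt_deriv[OF A_dt] Tt_dt] t]) (use s1 t1 in auto)
  have 3: "vector_derivative (\<lambda>\<tau>. (C s \<tau> / Dd s \<tau>) *\<^sub>R Ts s \<tau> x) (at t)
        = (C s t / Dd s t) *\<^sub>R Tst s t x + qt C Ct s t *\<^sub>R Ts s t x"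
    by (rule vd_at01[OF has_vector_derivative_scaleR[OF qt_deriv[OF C_dt] Ts_dt] t]) (use s1 t1 in auto)
  have 4: "vector_derivative (\<lambda>\<sigma>. (C \<sigma> t / Dd \<sigma> t) *\<^sub>R Tt \<sigma> t x) (at s)
        = (C s t / Dd s t) *\<^sub>R Tts s t x + qs C Cs s t *\<^sub>R Tt s t x"
    by (rule vd_at01[OF has_vector_derivative_scaleR[OF qs_deriv[OF C_ds] Tt_ds] s]) (use s1 t1 in auto)
  show ?thesis
    unfolding EL_lhs_def nA nB nC Dfun_eq 1 2 3 4 ELp_def by (simp add: algebra_simps)
qed

end

locale withV0 = setting +
  fixes V Vs Vt :: "real \<Rightarrow> real \<Rightarrow> 'a \<Rightarrow> 'a"
  assumes V_C1: "C1_param V Vs Vt"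
    and goodV: "good V" "good Vs" "good Vt"
begin

lemma ctsV: "cts V" "cts Vs" "cts Vt"
  unfolding cts_def using C1_cont[OF V_C1] by auto

lemmas gd = goodT goodV
lemmas ct = ctsT ctsV

lemma cwi: "good F \<Longrightarrow> good G \<Longrightarrow> cts F \<Longrightarrow> cts G \<Longrightarrow> continuous_on unit_sq (\<lambda>q. wi F G (fst q) (snd q))"
  by (rule wi_cont)

lemma V_ds: "\<sigma> \<in> {0..1} \<Longrightarrow> t \<in> {0..1} \<Longrightarrow> ((\<lambda>\<sigma>. V \<sigma> t x) has_vector_derivative Vs \<sigma> t x) (at \<sigma> within {0..1})"
  by (rule C1_pd_s[OF V_C1])
lemma V_dt: "\<tau> \<in> {0..1} \<Longrightarrow> s \<in> {0..1} \<Longrightarrow> ((\<lambda>\<tau>. V s \<tau> x) has_vector_derivative Vt s \<tau> x) (at \<tau> within {0..1})"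
  by (rule C1_pd_t[OF V_C1])

definition "aa = wi Ts Vs"
definition "bb = wi Tt Vt"

definition H :: "real \<times> real \<Rightarrow> real" where
  "H q = (qs B Bs (fst q) (snd q) * wi V Ts (fst q) (snd q) + B (fst q) (snd q) / Dd (fst q) (snd q) * wi V Tss (fst q) (snd q))
       + (qt A At (fst q) (snd q) * wi V Tt (fst q) (snd q) + A (fst q) (snd q) / Dd (fst q) (snd q) * wi V Ttt (fst q) (snd q))
       - (qt C Ct (fst q) (snd q) * wi V Ts (fst q) (snd q) + C (fst q) (snd q) / Dd (fst q) (snd q) * wi V Tst (fst q) (snd q))
       - (qs C Cs (fst q) (snd q) * wi V Tt (fst q) (snd q) + C (fst q) (snd q) / Dd (fst q) (snd q) * wi V Tts (fst q) (snd q))"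

lemma cqsB: "continuous_on unit_sq (\<lambda>q. qs B Bs (fst q) (snd q))" by (rule cqs[OF cB cBs])
lemma cqsC: "continuous_on unit_sq (\<lambda>q. qs C Cs (fst q) (snd q))" by (rule cqs[OF cC cCs])
lemma cqtA: "continuous_on unit_sq (\<lambda>q. qt A At (fst q) (snd q))" by (rule cqt[OF cA cAt])
lemma cqtC: "continuous_on unit_sq (\<lambda>q. qt C Ct (fst q) (snd q))" by (rule cqt[OF cC cCt])
lemma cBD: "continuous_on unit_sq (\<lambda>q. B (fst q) (snd q) / Dd (fst q) (snd q))" by (rule cdiv[OF cB])
lemma cAD: "continuous_on unit_sq (\<lambda>q. A (fst q) (snd q) / Dd (fst q) (snd q))" by (rule cdiv[OF cA])
lemma cCD: "continuous_on unit_sq (\<lambda>q. C (fst q) (snd q) / Dd (fst q) (snd q))" by (rule cdiv[OF cC])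

lemma cwiV: "continuous_on unit_sq (\<lambda>q. wi V Ts (fst q) (snd q))" "continuous_on unit_sq (\<lambda>q. wi V Tt (fst q) (snd q))"
  "continuous_on unit_sq (\<lambda>q. wi V Tss (fst q) (snd q))" "continuous_on unit_sq (\<lambda>q. wi V Tst (fst q) (snd q))"
  "continuous_on unit_sq (\<lambda>q. wi V Tts (fst q) (snd q))" "continuous_on unit_sq (\<lambda>q. wi V Ttt (fst q) (snd q))"
  "continuous_on unit_sq (\<lambda>q. wi Ts Vs (fst q) (snd q))" "continuous_on unit_sq (\<lambda>q. wi Tt Vt (fst q) (snd q))"
  "continuous_on unit_sq (\<lambda>q. wi Ts Vt (fst q) (snd q))" "continuous_on unit_sq (\<lambda>q. wi Vs Tt (fst q) (snd q))"
  by (rule cwi; rule gd ct)+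

lemma cH: "continuous_on unit_sq H"
  unfolding H_def by (intro continuous_on_add continuous_on_diff continuous_on_mult cqsB cqsC cqtA cqtC cBD cAD cCD cwiV)


end

locale withV = withV0 +
  assumes Vvan: "\<And>r x. r \<in> {0..1} \<Longrightarrow> V 0 r x = 0 \<and> V 1 r x = 0 \<and> V r 0 x = 0 \<and> V r 1 x = 0"
begin

lemma wi_V0: "r \<in> {0..1} \<Longrightarrow> wi F V 0 r = 0 \<and> wi F V 1 r = 0 \<and> wi F V r 0 = 0 \<and> wi F V r 1 = 0"
  unfolding wi_def wint_def using Vvan by simp

lemma wi_V0': "r \<in> {0..1} \<Longrightarrow> wi V F 0 r = 0 \<and> wi V F 1 r = 0 \<and> wi V F r 0 = 0 \<and> wi V F r 1 = 0"
  unfolding wi_def wint_def using Vvan by simp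

lemma T1: "J (\<lambda>q. B (fst q) (snd q) / Dd (fst q) (snd q) * aa (fst q) (snd q))
   = - J (\<lambda>q. qs B Bs (fst q) (snd q) * wi V Ts (fst q) (snd q)) - J (\<lambda>q. B (fst q) (snd q) / Dd (fst q) (snd q) * wi V Tss (fst q) (snd q))"
proof -
  have ibp: "J (\<lambda>q. B (fst q) (snd q) / Dd (fst q) (snd q) * (wi Tss V (fst q) (snd q) + wi Ts Vs (fst q) (snd q)))
      = - J (\<lambda>q. qs B Bs (fst q) (snd q) * wi Ts V (fst q) (snd q))"
  proof (rule ibp_s)
    show "((\<lambda>\<sigma>. B (fst (\<sigma>, t)) (snd (\<sigma>, t)) / Dd (fst (\<sigma>, t)) (snd (\<sigma>, t))) has_real_derivative qs B Bs (fst (\<sigma>, t)) (snd (\<sigma>, t))) (at \<sigma> within {0..1})"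
      if "\<sigma> \<in> {0..1}" "t \<in> {0..1}" for \<sigma> t
    proof -
      have "((\<lambda>\<sigma>. B \<sigma> t / Dd \<sigma> t) has_real_derivative qs B Bs \<sigma> t) (at \<sigma> within {0..1})"
        by (rule qs_deriv) (use B_ds that in auto)
      then show ?thesis by simp
    qed
    show "((\<lambda>\<sigma>. wi Ts V (fst (\<sigma>, t)) (snd (\<sigma>, t))) has_real_derivative wi Tss V (fst (\<sigma>, t)) (snd (\<sigma>, t)) + wi Ts Vs (fst (\<sigma>, t)) (snd (\<sigma>, t))) (at \<sigma> within {0..1})"
      if "\<sigma> \<in> {0..1}" "t \<in> {0..1}" for \<sigma> t using wi_ds[OF gd(1) gd(7) gd(3) gd(8) Ts_ds V_ds that] by simp
  qed (use wi_V0 cBD cqsB in \<open>auto intro!: continuous_on_add cwi gd ct\<close>)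
  have "J (\<lambda>q. B (fst q) (snd q) / Dd (fst q) (snd q) * aa (fst q) (snd q))
      = J (\<lambda>q. B (fst q) (snd q) / Dd (fst q) (snd q) * (wi Tss V (fst q) (snd q) + wi Ts Vs (fst q) (snd q))
            - B (fst q) (snd q) / Dd (fst q) (snd q) * wi V Tss (fst q) (snd q))"
    unfolding aa_def by (simp add: algebra_simps wi_comm[of Tss V])
  also have "\<dots> = J (\<lambda>q. B (fst q) (snd q) / Dd (fst q) (snd q) * (wi Tss V (fst q) (snd q) + wi Ts Vs (fst q) (snd q)))
            - J (\<lambda>q. B (fst q) (snd q) / Dd (fst q) (snd q) * wi V Tss (fst q) (snd q))"
    by (rule J_diff) (intro continuous_on_mult continuous_on_add cBD cwi gd ct)+
  finally show ?thesis unfolding ibp by (simp add: wi_comm[of Ts V])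
qed


lemma T2: "J (\<lambda>q. A (fst q) (snd q) / Dd (fst q) (snd q) * bb (fst q) (snd q))
   = - J (\<lambda>q. qt A At (fst q) (snd q) * wi V Tt (fst q) (snd q)) - J (\<lambda>q. A (fst q) (snd q) / Dd (fst q) (snd q) * wi V Ttt (fst q) (snd q))"
proof -
  have ibp: "J (\<lambda>q. A (fst q) (snd q) / Dd (fst q) (snd q) * (wi Ttt V (fst q) (snd q) + wi Tt Vt (fst q) (snd q)))
      = - J (\<lambda>q. qt A At (fst q) (snd q) * wi Tt V (fst q) (snd q))"
  proof (rule ibp_t)
    show "((\<lambda>\<tau>. A (fst (s, \<tau>)) (snd (s, \<tau>)) / Dd (fst (s, \<tau>)) (snd (s, \<tau>))) has_real_derivative qt A At (fst (s, \<tau>)) (snd (s, \<tau>))) (at \<tau> within {0..1})"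
      if "\<tau> \<in> {0..1}" "s \<in> {0..1}" for \<tau> s
    proof -
      have "((\<lambda>\<tau>. A s \<tau> / Dd s \<tau>) has_real_derivative qt A At s \<tau>) (at \<tau> within {0..1})"
        by (rule qt_deriv) (use A_dt that in auto)
      then show ?thesis by simp
    qed
    show "((\<lambda>\<tau>. wi Tt V (fst (s, \<tau>)) (snd (s, \<tau>))) has_real_derivative wi Ttt V (fst (s, \<tau>)) (snd (s, \<tau>)) + wi Tt Vt (fst (s, \<tau>)) (snd (s, \<tau>))) (at \<tau> within {0..1})"
      if "\<tau> \<in> {0..1}" "s \<in> {0..1}" for \<tau> s using wi_dt[OF gd(2) gd(7) gd(6) gd(9) Tt_dt V_dt that(2,1)] by simp
  qed (use wi_V0 cAD cqtA in \<open>auto intro!: continuous_on_add cwi gd ct\<close>)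
  have "J (\<lambda>q. A (fst q) (snd q) / Dd (fst q) (snd q) * bb (fst q) (snd q))
      = J (\<lambda>q. A (fst q) (snd q) / Dd (fst q) (snd q) * (wi Ttt V (fst q) (snd q) + wi Tt Vt (fst q) (snd q))
            - A (fst q) (snd q) / Dd (fst q) (snd q) * wi V Ttt (fst q) (snd q))"
    unfolding bb_def by (simp add: algebra_simps wi_comm[of Ttt V])
  also have "\<dots> = J (\<lambda>q. A (fst q) (snd q) / Dd (fst q) (snd q) * (wi Ttt V (fst q) (snd q) + wi Tt Vt (fst q) (snd q)))
            - J (\<lambda>q. A (fst q) (snd q) / Dd (fst q) (snd q) * wi V Ttt (fst q) (snd q))"
    by (rule J_diff) (intro continuous_on_mult continuous_on_add cAD cwi gd ct)+
  finally show ?thesis unfolding ibp by (simp add: wi_comm[of Tt V])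
qed

lemma T3: "J (\<lambda>q. C (fst q) (snd q) / Dd (fst q) (snd q) * wi Ts Vt (fst q) (snd q))
   = - J (\<lambda>q. qt C Ct (fst q) (snd q) * wi V Ts (fst q) (snd q)) - J (\<lambda>q. C (fst q) (snd q) / Dd (fst q) (snd q) * wi V Tst (fst q) (snd q))"
proof -
  have ibp: "J (\<lambda>q. C (fst q) (snd q) / Dd (fst q) (snd q) * (wi Tst V (fst q) (snd q) + wi Ts Vt (fst q) (snd q)))
      = - J (\<lambda>q. qt C Ct (fst q) (snd q) * wi Ts V (fst q) (snd q))"
  proof (rule ibp_t)
    show "((\<lambda>\<tau>. C (fst (s, \<tau>)) (snd (s, \<tau>)) / Dd (fst (s, \<tau>)) (snd (s, \<tau>))) has_real_derivative qt C Ct (fst (s, \<tau>)) (snd (s, \<tau>))) (at \<tau> within {0..1})"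
      if "\<tau> \<in> {0..1}" "s \<in> {0..1}" for \<tau> s
    proof -
      have "((\<lambda>\<tau>. C s \<tau> / Dd s \<tau>) has_real_derivative qt C Ct s \<tau>) (at \<tau> within {0..1})"
        by (rule qt_deriv) (use C_dt that in auto)
      then show ?thesis by simp
    qed
    show "((\<lambda>\<tau>. wi Ts V (fst (s, \<tau>)) (snd (s, \<tau>))) has_real_derivative wi Tst V (fst (s, \<tau>)) (snd (s, \<tau>)) + wi Ts Vt (fst (s, \<tau>)) (snd (s, \<tau>))) (at \<tau> within {0..1})"
      if "\<tau> \<in> {0..1}" "s \<in> {0..1}" for \<tau> s using wi_dt[OF gd(1) gd(7) gd(4) gd(9) Ts_dt V_dt that(2,1)] by simp
  qed (use wi_V0 cCD cqtC in \<open>auto intro!: continuous_on_add cwi gd ct\<close>)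
  have "J (\<lambda>q. C (fst q) (snd q) / Dd (fst q) (snd q) * wi Ts Vt (fst q) (snd q))
      = J (\<lambda>q. C (fst q) (snd q) / Dd (fst q) (snd q) * (wi Tst V (fst q) (snd q) + wi Ts Vt (fst q) (snd q))
            - C (fst q) (snd q) / Dd (fst q) (snd q) * wi V Tst (fst q) (snd q))"
    by (rule arg_cong[where f = J], rule ext) (simp add: wi_comm[of Tst V] ring_distribs)
  also have "\<dots> = J (\<lambda>q. C (fst q) (snd q) / Dd (fst q) (snd q) * (wi Tst V (fst q) (snd q) + wi Ts Vt (fst q) (snd q)))
            - J (\<lambda>q. C (fst q) (snd q) / Dd (fst q) (snd q) * wi V Tst (fst q) (snd q))"
    by (rule J_diff) (intro continuous_on_mult continuous_on_add cCD cwi gd ct)+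
  finally show ?thesis unfolding ibp by (simp add: wi_comm[of Ts V])
qed

lemma T4: "J (\<lambda>q. C (fst q) (snd q) / Dd (fst q) (snd q) * wi Vs Tt (fst q) (snd q))
   = - J (\<lambda>q. qs C Cs (fst q) (snd q) * wi V Tt (fst q) (snd q)) - J (\<lambda>q. C (fst q) (snd q) / Dd (fst q) (snd q) * wi V Tts (fst q) (snd q))"
proof -
  have ibp: "J (\<lambda>q. C (fst q) (snd q) / Dd (fst q) (snd q) * (wi Vs Tt (fst q) (snd q) + wi V Tts (fst q) (snd q)))
      = - J (\<lambda>q. qs C Cs (fst q) (snd q) * wi V Tt (fst q) (snd q))"
  proof (rule ibp_s)
    show "((\<lambda>\<sigma>. C (fst (\<sigma>, t)) (snd (\<sigma>, t)) / Dd (fst (\<sigma>, t)) (snd (\<sigma>, t))) has_real_derivative qs C Cs (fst (\<sigma>, t)) (snd (\<sigma>, t))) (at \<sigma> within {0..1})"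
      if "\<sigma> \<in> {0..1}" "t \<in> {0..1}" for \<sigma> t
    proof -
      have "((\<lambda>\<sigma>. C \<sigma> t / Dd \<sigma> t) has_real_derivative qs C Cs \<sigma> t) (at \<sigma> within {0..1})"
        by (rule qs_deriv) (use C_ds that in auto)
      then show ?thesis by simp
    qed
    show "((\<lambda>\<sigma>. wi V Tt (fst (\<sigma>, t)) (snd (\<sigma>, t))) has_real_derivative wi Vs Tt (fst (\<sigma>, t)) (snd (\<sigma>, t)) + wi V Tts (fst (\<sigma>, t)) (snd (\<sigma>, t))) (at \<sigma> within {0..1})"
      if "\<sigma> \<in> {0..1}" "t \<in> {0..1}" for \<sigma> t using wi_ds[OF gd(7) gd(2) gd(8) gd(5) V_ds Tt_ds that] by simp
  qed (use wi_V0' cCD cqsC in \<open>auto intro!: continuous_on_add cwi gd ct\<close>)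
  have "J (\<lambda>q. C (fst q) (snd q) / Dd (fst q) (snd q) * wi Vs Tt (fst q) (snd q))
      = J (\<lambda>q. C (fst q) (snd q) / Dd (fst q) (snd q) * (wi Vs Tt (fst q) (snd q) + wi V Tts (fst q) (snd q))
            - C (fst q) (snd q) / Dd (fst q) (snd q) * wi V Tts (fst q) (snd q))"
    by (rule arg_cong[where f = J], rule ext) (simp add: ring_distribs)
  also have "\<dots> = J (\<lambda>q. C (fst q) (snd q) / Dd (fst q) (snd q) * (wi Vs Tt (fst q) (snd q) + wi V Tts (fst q) (snd q)))
            - J (\<lambda>q. C (fst q) (snd q) / Dd (fst q) (snd q) * wi V Tts (fst q) (snd q))"
    by (rule J_diff) (intro continuous_on_mult continuous_on_add cCD cwi gd ct)+
  finally show ?thesis unfolding ibp by simp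
qed



end

context withV
begin

lemma Jhi: "continuous_on unit_sq f \<Longrightarrow> (f has_integral J f) (cbox (0,0) (1,1))"
  unfolding J_def by (rule integrable_integral) (rule J_integrable)

lemma FV_ibp:
  "J (\<lambda>q. (aa (fst q) (snd q) * B (fst q) (snd q) + A (fst q) (snd q) * bb (fst q) (snd q)
         - C (fst q) (snd q) * (wi Ts Vt (fst q) (snd q) + wi Vs Tt (fst q) (snd q))) / Dd (fst q) (snd q)) = - J H"
proof -
  let ?k1 = "\<lambda>q. B (fst q) (snd q) / Dd (fst q) (snd q)"
  let ?k2 = "\<lambda>q. A (fst q) (snd q) / Dd (fst q) (snd q)"
  let ?k3 = "\<lambda>q. C (fst q) (snd q) / Dd (fst q) (snd q)"
  have c1: "continuous_on unit_sq (\<lambda>q. ?k1 q * aa (fst q) (snd q))" unfolding aa_def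
    by (intro continuous_on_mult cBD cwiV)
  have c2: "continuous_on unit_sq (\<lambda>q. ?k2 q * bb (fst q) (snd q))" unfolding bb_def
    by (intro continuous_on_mult cAD cwiV)
  have c3: "continuous_on unit_sq (\<lambda>q. ?k3 q * wi Ts Vt (fst q) (snd q))"
    by (intro continuous_on_mult cCD cwiV)
  have c4: "continuous_on unit_sq (\<lambda>q. ?k3 q * wi Vs Tt (fst q) (snd q))"
    by (intro continuous_on_mult cCD cwiV)
  have hi1: "((\<lambda>q. ?k1 q * aa (fst q) (snd q) + ?k2 q * bb (fst q) (snd q) - ?k3 q * wi Ts Vt (fst q) (snd q)
        - ?k3 q * wi Vs Tt (fst q) (snd q)) has_integral
       (J (\<lambda>q. ?k1 q * aa (fst q) (snd q)) + J (\<lambda>q. ?k2 q * bb (fst q) (snd q))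
        - J (\<lambda>q. ?k3 q * wi Ts Vt (fst q) (snd q)) - J (\<lambda>q. ?k3 q * wi Vs Tt (fst q) (snd q)))) (cbox (0,0) (1,1))"
    by (intro has_integral_add has_integral_diff Jhi c1 c2 c3 c4)
  have e1: "(\<lambda>q. (aa (fst q) (snd q) * B (fst q) (snd q) + A (fst q) (snd q) * bb (fst q) (snd q)
         - C (fst q) (snd q) * (wi Ts Vt (fst q) (snd q) + wi Vs Tt (fst q) (snd q))) / Dd (fst q) (snd q))
     = (\<lambda>q. ?k1 q * aa (fst q) (snd q) + ?k2 q * bb (fst q) (snd q) - ?k3 q * wi Ts Vt (fst q) (snd q)
        - ?k3 q * wi Vs Tt (fst q) (snd q))"
    by (rule ext) (simp add: diff_divide_distrib add_divide_distrib ring_distribs)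
  have L: "J (\<lambda>q. (aa (fst q) (snd q) * B (fst q) (snd q) + A (fst q) (snd q) * bb (fst q) (snd q)
         - C (fst q) (snd q) * (wi Ts Vt (fst q) (snd q) + wi Vs Tt (fst q) (snd q))) / Dd (fst q) (snd q))
     = J (\<lambda>q. ?k1 q * aa (fst q) (snd q)) + J (\<lambda>q. ?k2 q * bb (fst q) (snd q))
        - J (\<lambda>q. ?k3 q * wi Ts Vt (fst q) (snd q)) - J (\<lambda>q. ?k3 q * wi Vs Tt (fst q) (snd q))"
    using integral_unique[OF hi1] unfolding e1 by (simp only: J_def)
  have hi2: "(H has_integral
      (J (\<lambda>q. qs B Bs (fst q) (snd q) * wi V Ts (fst q) (snd q)) + J (\<lambda>q. ?k1 q * wi V Tss (fst q) (snd q))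
      + (J (\<lambda>q. qt A At (fst q) (snd q) * wi V Tt (fst q) (snd q)) + J (\<lambda>q. ?k2 q * wi V Ttt (fst q) (snd q)))
      - (J (\<lambda>q. qt C Ct (fst q) (snd q) * wi V Ts (fst q) (snd q)) + J (\<lambda>q. ?k3 q * wi V Tst (fst q) (snd q)))
      - (J (\<lambda>q. qs C Cs (fst q) (snd q) * wi V Tt (fst q) (snd q)) + J (\<lambda>q. ?k3 q * wi V Tts (fst q) (snd q)))))
     (cbox (0,0) (1,1))"
    unfolding H_def
    by (intro has_integral_add has_integral_diff Jhi continuous_on_mult cqsB cqsC cqtA cqtC cBD cAD cCD cwiV)
  have R: "J H = J (\<lambda>q. qs B Bs (fst q) (snd q) * wi V Ts (fst q) (snd q)) + J (\<lambda>q. ?k1 q * wi V Tss (fst q) (snd q))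
      + (J (\<lambda>q. qt A At (fst q) (snd q) * wi V Tt (fst q) (snd q)) + J (\<lambda>q. ?k2 q * wi V Ttt (fst q) (snd q)))
      - (J (\<lambda>q. qt C Ct (fst q) (snd q) * wi V Ts (fst q) (snd q)) + J (\<lambda>q. ?k3 q * wi V Tst (fst q) (snd q)))
      - (J (\<lambda>q. qs C Cs (fst q) (snd q) * wi V Tt (fst q) (snd q)) + J (\<lambda>q. ?k3 q * wi V Tts (fst q) (snd q)))"
    using integral_unique[OF hi2] by (simp only: J_def)
  show ?thesis unfolding L R T1 T2 T3 T4 by linarith
qed

end

context setting
begin

lemma hb: "good F \<Longrightarrow> good G \<Longrightarrow> s \<in> {0..1} \<Longrightarrow> t \<in> {0..1} \<Longrightarrow>
    has_bochner_integral lborel (\<lambda>x. (F s t x \<bullet> G s t x) * \<rho> x) (wi F G s t)"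
  unfolding wi_def wint_def by (rule has_bochner_integral_integrable) (rule wi_int)

lemma wint_expand:
  assumes "good F" "good G" "good F'" "good G'" "s \<in> {0..1}" "t \<in> {0..1}"
  shows "wint \<rho> (\<lambda>x. (F s t x + e *\<^sub>R F' s t x) \<bullet> (G s t x + e *\<^sub>R G' s t x))
       = wi F G s t + e * (wi F G' s t + wi F' G s t) + e\<^sup>2 * wi F' G' s t"
proof -
  have h1: "has_bochner_integral lborel (\<lambda>x. (F s t x \<bullet> G s t x) * \<rho> x + e * ((F s t x \<bullet> G' s t x) * \<rho> x + (F' s t x \<bullet> G s t x) * \<rho> x)
        + e\<^sup>2 * ((F' s t x \<bullet> G' s t x) * \<rho> x))
      (wi F G s t + e * (wi F G' s t + wi F' G s t) + e\<^sup>2 * wi F' G' s t)"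
    by (intro has_bochner_integral_add has_bochner_integral_mult_right hb assms)
  have e1: "(\<lambda>x. (F s t x \<bullet> G s t x) * \<rho> x + e * ((F s t x \<bullet> G' s t x) * \<rho> x + (F' s t x \<bullet> G s t x) * \<rho> x)
        + e\<^sup>2 * ((F' s t x \<bullet> G' s t x) * \<rho> x))
     = (\<lambda>x. ((F s t x + e *\<^sub>R F' s t x) \<bullet> (G s t x + e *\<^sub>R G' s t x)) * \<rho> x)"
    by (rule ext) (simp add: inner_add_left inner_add_right algebra_simps power2_eq_square)
  show ?thesis using has_bochner_integral_integral_eq[OF h1] unfolding e1 wint_def .
qed

end

context withV0
begin

lemma H_hb:
  assumes q: "q \<in> unit_sq"
  shows "has_bochner_integral lborel (\<lambda>x. (V (fst q) (snd q) x \<bullet> ELp (fst q) (snd q) x) * \<rho> x) (H q)"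
proof -
  obtain s t where st: "q = (s, t)" "s \<in> {0..1}" "t \<in> {0..1}" using q unfolding unit_sq_def by auto
  have h1: "has_bochner_integral lborel (\<lambda>x.
          (qs B Bs s t * ((V s t x \<bullet> Ts s t x) * \<rho> x) + B s t / Dd s t * ((V s t x \<bullet> Tss s t x) * \<rho> x))
        + (qt A At s t * ((V s t x \<bullet> Tt s t x) * \<rho> x) + A s t / Dd s t * ((V s t x \<bullet> Ttt s t x) * \<rho> x))
        - (qt C Ct s t * ((V s t x \<bullet> Ts s t x) * \<rho> x) + C s t / Dd s t * ((V s t x \<bullet> Tst s t x) * \<rho> x))
        - (qs C Cs s t * ((V s t x \<bullet> Tt s t x) * \<rho> x) + C s t / Dd s t * ((V s t x \<bullet> Tts s t x) * \<rho> x))) (H q)"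
    unfolding H_def st(1) fst_conv snd_conv
    by (intro has_bochner_integral_add has_bochner_integral_diff has_bochner_integral_mult_right hb gd st(2,3))
  have e1: "(\<lambda>x.
          (qs B Bs s t * ((V s t x \<bullet> Ts s t x) * \<rho> x) + B s t / Dd s t * ((V s t x \<bullet> Tss s t x) * \<rho> x))
        + (qt A At s t * ((V s t x \<bullet> Tt s t x) * \<rho> x) + A s t / Dd s t * ((V s t x \<bullet> Ttt s t x) * \<rho> x))
        - (qt C Ct s t * ((V s t x \<bullet> Ts s t x) * \<rho> x) + C s t / Dd s t * ((V s t x \<bullet> Tst s t x) * \<rho> x))
        - (qs C Cs s t * ((V s t x \<bullet> Tt s t x) * \<rho> x) + C s t / Dd s t * ((V s t x \<bullet> Tts s t x) * \<rho> x)))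
     = (\<lambda>x. (V s t x \<bullet> ELp s t x) * \<rho> x)"
    by (rule ext) (simp add: ELp_def inner_add_right inner_diff_right distrib_right left_diff_distrib)
  show ?thesis using h1 unfolding e1 st(1) fst_conv snd_conv .
qed

lemma H_eq:
  assumes q: "q \<in> unit_sq"
  shows "H q = wint \<rho> (\<lambda>x. V (fst q) (snd q) x \<bullet> ELp (fst q) (snd q) x)"
  using has_bochner_integral_integral_eq[OF H_hb[OF q]] unfolding wint_def by (rule sym)

lemma H_int:
  assumes q: "q \<in> unit_sq"
  shows "integrable lborel (\<lambda>x. (V (fst q) (snd q) x \<bullet> ELp (fst q) (snd q) x) * \<rho> x)"
  using H_hb[OF q] unfolding has_bochner_integral_iff by blast

end


lemma lift:
  assumes "continuous_on unit_sq (\<lambda>q. f (fst q) (snd q))"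
  shows "continuous_on (X \<times> unit_sq) (\<lambda>z. f (fst (snd z)) (snd (snd z)))"
  by (rule continuous_on_compose2[OF assms, of _ snd]) (auto intro!: continuous_intros)

context withV
begin

definition "a2 = wi Vs Vs"
definition "b2 = wi Vt Vt"
definition "c2 = wi Vs Vt"
definition "cc s t = wi Ts Vt s t + wi Vs Tt s t"
definition "P e s t = (A s t + 2 * e * aa s t + e\<^sup>2 * a2 s t) * (B s t + 2 * e * bb s t + e\<^sup>2 * b2 s t)
   - (C s t + e * cc s t + e\<^sup>2 * c2 s t)\<^sup>2"
definition "Pd e s t = 2 * (aa s t + e * a2 s t) * (B s t + 2 * e * bb s t + e\<^sup>2 * b2 s t)
   + (A s t + 2 * e * aa s t + e\<^sup>2 * a2 s t) * (2 * (bb s t + e * b2 s t))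
   - 2 * (C s t + e * cc s t + e\<^sup>2 * c2 s t) * (cc s t + 2 * e * c2 s t)"

lemma Dfun_eps:
  assumes "s \<in> {0..1}" "t \<in> {0..1}"
  shows "Dfun \<rho> (\<lambda>s t x. Ts s t x + e *\<^sub>R Vs s t x) (\<lambda>s t x. Tt s t x + e *\<^sub>R Vt s t x) s t = sqrt (P e s t)"
proof -
  have 1: "wint \<rho> (\<lambda>x. (norm (Ts s t x + e *\<^sub>R Vs s t x))\<^sup>2) = A s t + 2 * e * aa s t + e\<^sup>2 * a2 s t"
    unfolding power2_norm_eq_inner wint_expand[OF gd(1) gd(1) gd(8) gd(8) assms] A_def aa_def a2_def
    by (simp add: wi_comm[of Vs Ts])
  have 2: "wint \<rho> (\<lambda>x. (norm (Tt s t x + e *\<^sub>R Vt s t x))\<^sup>2) = B s t + 2 * e * bb s t + e\<^sup>2 * b2 s t"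
    unfolding power2_norm_eq_inner wint_expand[OF gd(2) gd(2) gd(9) gd(9) assms] B_def bb_def b2_def
    by (simp add: wi_comm[of Vt Tt])
  have 3: "wint \<rho> (\<lambda>x. (Ts s t x + e *\<^sub>R Vs s t x) \<bullet> (Tt s t x + e *\<^sub>R Vt s t x)) = C s t + e * cc s t + e\<^sup>2 * c2 s t"
    unfolding wint_expand[OF gd(1) gd(2) gd(8) gd(9) assms] C_def cc_def c2_def by simp
  show ?thesis unfolding Dfun_def 1 2 3 P_def ..
qed

lemma caa: "continuous_on unit_sq (\<lambda>q. aa (fst q) (snd q))" unfolding aa_def by (rule cwi; rule gd ct)
lemma cbb: "continuous_on unit_sq (\<lambda>q. bb (fst q) (snd q))" unfolding bb_def by (rule cwi; rule gd ct)
lemma ca2: "continuous_on unit_sq (\<lambda>q. a2 (fst q) (snd q))" unfolding a2_def by (rule cwi; rule gd ct)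
lemma cb2: "continuous_on unit_sq (\<lambda>q. b2 (fst q) (snd q))" unfolding b2_def by (rule cwi; rule gd ct)
lemma cc2: "continuous_on unit_sq (\<lambda>q. c2 (fst q) (snd q))" unfolding c2_def by (rule cwi; rule gd ct)
lemma ccc: "continuous_on unit_sq (\<lambda>q. cc (fst q) (snd q))" unfolding cc_def by (rule continuous_on_add; rule cwi; rule gd ct)

lemma cPq: "continuous_on unit_sq (\<lambda>q. P e (fst q) (snd q))"
  unfolding P_def by (intro cint cA cB cC caa cbb ca2 cb2 cc2 ccc)

lemma cPz: "continuous_on (X \<times> unit_sq) (\<lambda>z. P (fst z) (fst (snd z)) (snd (snd z)))"
  unfolding P_def
  by (intro cint lift[OF cA] lift[OF cB] lift[OF cC] lift[OF caa] lift[OF cbb] lift[OF ca2] lift[OF cb2]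
      lift[OF cc2] lift[OF ccc] continuous_on_fst[OF continuous_on_id])

lemma cPdz: "continuous_on (X \<times> unit_sq) (\<lambda>z. Pd (fst z) (fst (snd z)) (snd (snd z)))"
  unfolding Pd_def
  by (intro cint lift[OF cA] lift[OF cB] lift[OF cC] lift[OF caa] lift[OF cbb] lift[OF ca2] lift[OF cb2]
      lift[OF cc2] lift[OF ccc] continuous_on_fst[OF continuous_on_id])

lemma action_eq:
  "action \<rho> (\<lambda>s t x. Ts s t x + e *\<^sub>R Vs s t x) (\<lambda>s t x. Tt s t x + e *\<^sub>R Vt s t x)
     = J (\<lambda>q. sqrt (P e (fst q) (snd q)))"
proof -
  have "action \<rho> (\<lambda>s t x. Ts s t x + e *\<^sub>R Vs s t x) (\<lambda>s t x. Tt s t x + e *\<^sub>R Vt s t x)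
      = integral {0..1} (\<lambda>s. integral {0..1} (\<lambda>t. sqrt (P e s t)))"
    unfolding action_def by (intro integral_cong) (simp add: Dfun_eps)
  also have "\<dots> = J (\<lambda>q. sqrt (P e (fst q) (snd q)))"
    by (subst J_iter_st) (auto intro!: continuous_on_real_sqrt cPq)
  finally show ?thesis .
qed

lemma P0: "P 0 s t = A s t * B s t - (C s t)\<^sup>2"
  unfolding P_def by simp

lemma delta: "\<exists>\<delta>>0. \<forall>e q. \<bar>e\<bar> < \<delta> \<longrightarrow> q \<in> unit_sq \<longrightarrow> P e (fst q) (snd q) > 0"
proof -
  have cs: "compact unit_sq" unfolding unit_sq_cbox by (rule compact_cbox)
  have ne: "unit_sq \<noteq> {}" unfolding unit_sq_def by auto
  obtain q0 where q0: "q0 \<in> unit_sq" and mn: "\<And>q. q \<in> unit_sq \<Longrightarrow> P 0 (fst q0) (snd q0) \<le> P 0 (fst q) (snd q)"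
    using continuous_attains_inf[OF cs ne cPq[of 0]] by blast
  define m where "m = P 0 (fst q0) (snd q0)"
  have m: "m > 0" unfolding m_def P0 using DD_pos sq_mem[OF q0] by blast
  let ?S = "{-1..1::real} \<times> unit_sq"
  have "uniformly_continuous_on ?S (\<lambda>z. P (fst z) (fst (snd z)) (snd (snd z)))"
    by (rule compact_uniformly_continuous[OF cPz]) (intro compact_Times compact_Icc cs)
  then obtain d where d: "d > 0" and dd: "\<And>x x'. x \<in> ?S \<Longrightarrow> x' \<in> ?S \<Longrightarrow> dist x' x < d \<Longrightarrow>
      dist (P (fst x') (fst (snd x')) (snd (snd x'))) (P (fst x) (fst (snd x)) (snd (snd x))) < m"
    unfolding uniformly_continuous_on_def using m by metis
  show ?thesis
  proof (intro exI[of _ "min d 1"] conjI allI impI)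
    show "min d 1 > 0" using d by simp
    fix e :: real and q assume e: "\<bar>e\<bar> < min d 1" and q: "q \<in> unit_sq"
    have "dist (P e (fst q) (snd q)) (P 0 (fst q) (snd q)) < m"
    proof -
      have "-1 \<le> e \<and> e \<le> 1" using e by auto
      then show ?thesis using dd[of "(0, q)" "(e, q)"] e q by (auto simp: dist_Pair_Pair dist_real_def)
    qed
    moreover have "P 0 (fst q) (snd q) \<ge> m" unfolding m_def using mn[OF q] .
    ultimately show "P e (fst q) (snd q) > 0" by (simp add: dist_real_def)
  qed
qed

end


context withV
begin

lemma P_deriv: "((\<lambda>e. P e s t) has_real_derivative Pd e s t) (at e within U)"
  unfolding P_def Pd_def
  by (auto intro!: derivative_eq_intros simp: power2_eq_square algebra_simps)

lemma FV: "((\<lambda>e. action \<rho> (\<lambda>s t x. Ts s t x + e *\<^sub>R Vs s t x) (\<lambda>s t x. Tt s t x + e *\<^sub>R Vt s t x))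
            has_real_derivative - J H) (at 0)"
proof -
  obtain \<delta> where \<delta>: "\<delta> > 0" and pos: "\<And>e q. \<bar>e\<bar> < \<delta> \<Longrightarrow> q \<in> unit_sq \<Longrightarrow> P e (fst q) (snd q) > 0"
    using delta by blast
  define U where "U = ball (0::real) \<delta>"
  have posU: "P e (fst q) (snd q) > 0" if "e \<in> U" "q \<in> cbox (0,0) (1,1)" for e q
    using pos that unfolding U_def unit_sq_cbox[symmetric] by (simp add: dist_real_def)
  define fx where "fx e q = Pd e (fst q) (snd q) / (2 * sqrt (P e (fst q) (snd q)))" for e q
  have L: "((\<lambda>e. integral (cbox (0,0) (1,1)) (\<lambda>q. sqrt (P e (fst q) (snd q)))) has_field_derivative
        integral (cbox (0,0) (1,1)) (fx 0)) (at 0 within U)"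
  proof (rule leibniz_rule_field_derivative)
    show "((\<lambda>e. sqrt (P e (fst q) (snd q))) has_field_derivative fx e q) (at e within U)"
      if "e \<in> U" "q \<in> cbox (0,0) (1,1)" for e q
      using DERIV_chain2[OF DERIV_real_sqrt[OF posU[OF that]] P_deriv] unfolding fx_def
      by (simp add: field_simps)
    show "(\<lambda>q. sqrt (P e (fst q) (snd q))) integrable_on cbox (0,0) (1,1)" for e
      by (rule J_integrable) (intro continuous_on_real_sqrt cPq)
    have "continuous_on (U \<times> unit_sq) (\<lambda>z. Pd (fst z) (fst (snd z)) (snd (snd z)) / (2 * sqrt (P (fst z) (fst (snd z)) (snd (snd z)))))"
      by (intro continuous_on_divide continuous_on_mult continuous_on_const continuous_on_real_sqrt cPz cPdz)
         (use posU in \<open>force simp: unit_sq_cbox\<close>)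
    then show "continuous_on (U \<times> cbox (0,0) (1,1)) (\<lambda>(e, q). fx e q)"
      unfolding fx_def unit_sq_cbox case_prod_unfold .
    show "0 \<in> U" "convex U" unfolding U_def using \<delta> by auto
  qed
  have L': "((\<lambda>e. J (\<lambda>q. sqrt (P e (fst q) (snd q)))) has_field_derivative J (fx 0)) (at 0)"
    using L unfolding J_def U_def by (simp add: at_within_open[OF _ open_ball] \<delta>)
  have "J (fx 0) = J (\<lambda>q. (aa (fst q) (snd q) * B (fst q) (snd q) + A (fst q) (snd q) * bb (fst q) (snd q)
         - C (fst q) (snd q) * (wi Ts Vt (fst q) (snd q) + wi Vs Tt (fst q) (snd q))) / Dd (fst q) (snd q))"
    unfolding J_def
  proof (rule integral_cong)
    fix q :: "real \<times> real" assume "q \<in> cbox (0,0) (1,1)"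
    have e: "Pd 0 (fst q) (snd q) = 2 * (aa (fst q) (snd q) * B (fst q) (snd q) + A (fst q) (snd q) * bb (fst q) (snd q)
         - C (fst q) (snd q) * (wi Ts Vt (fst q) (snd q) + wi Vs Tt (fst q) (snd q)))"
      unfolding Pd_def cc_def by (simp add: algebra_simps)
    show "fx 0 q = (aa (fst q) (snd q) * B (fst q) (snd q) + A (fst q) (snd q) * bb (fst q) (snd q)
         - C (fst q) (snd q) * (wi Ts Vt (fst q) (snd q) + wi Vs Tt (fst q) (snd q))) / Dd (fst q) (snd q)"
      unfolding fx_def e P0 Dd_def by (rule mult_divide_mult_cancel_left) simp
  qed
  then have "J (fx 0) = - J H" using FV_ibp by simp
  moreover have "(\<lambda>e. action \<rho> (\<lambda>s t x. Ts s t x + e *\<^sub>R Vs s t x) (\<lambda>s t x. Tt s t x + e *\<^sub>R Vt s t x))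
      = (\<lambda>e. J (\<lambda>q. sqrt (P e (fst q) (snd q))))"
    by (rule ext) (rule action_eq)
  ultimately show ?thesis using L' by simp
qed

end

definition bmp :: "real \<Rightarrow> real \<Rightarrow> real \<Rightarrow> real" where
  "bmp a r s = (max 0 (r\<^sup>2 - (s - a)\<^sup>2))\<^sup>2"
definition bmp' :: "real \<Rightarrow> real \<Rightarrow> real \<Rightarrow> real" where
  "bmp' a r s = 2 * max 0 (r\<^sup>2 - (s - a)\<^sup>2) * (- 2 * (s - a))"

lemma bmp_deriv: "(bmp a r has_real_derivative bmp' a r s) (at s)"
proof -
  define u where "u y = r\<^sup>2 - (y - a)\<^sup>2" for y
  have ud: "(u has_real_derivative (- 2 * (y - a))) (at y)" for y
    unfolding u_def by (auto intro!: derivative_eq_intros)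
  have cu: "continuous_on UNIV u" unfolding u_def by (intro continuous_intros)
  consider "u s > 0" | "u s < 0" | "u s = 0" by linarith
  then show ?thesis
  proof cases
    case 1
    have d2: "bmp' a r s = 2 * u s * (- 2 * (s - a))" using 1 by (simp add: bmp'_def u_def)
    have "((\<lambda>y. (u y)\<^sup>2) has_real_derivative bmp' a r s) (at s)"
      using DERIV_power[OF ud, of 2 s] unfolding d2 by (simp add: algebra_simps)
    then show ?thesis
    proof (rule has_field_derivative_transform_within_open[where S = "{y. u y > 0}"])
      show "open {y. u y > 0}" using cu by (simp add: open_Collect_less continuous_on_const)
    qed (use 1 in \<open>auto simp: bmp_def bmp'_def u_def\<close>)
  next
    case 2
    have d2: "bmp' a r s = 0" using 2 by (simp add: bmp'_def u_def)
    have "((\<lambda>y. 0) has_real_derivative bmp' a r s) (at s)" unfolding d2 by (rule DERIV_const)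
    then show ?thesis
    proof (rule has_field_derivative_transform_within_open[where S = "{y. u y < 0}"])
      show "open {y. u y < 0}" using cu by (simp add: open_Collect_less continuous_on_const)
    qed (use 2 in \<open>auto simp: bmp_def bmp'_def u_def\<close>)
  next
    case 3
    have b0: "bmp' a r s = 0" unfolding bmp'_def using 3 by (simp add: u_def)
    have v: "((\<lambda>y. (u y)\<^sup>2) has_real_derivative 0) (at s)"
      using DERIV_power[OF ud, of 2 s] 3 by simp
    have vq: "((\<lambda>y. ((u y)\<^sup>2 - (u s)\<^sup>2) / (y - s)) \<longlongrightarrow> 0) (at s)"
      using v unfolding has_field_derivative_iff .
    have "((\<lambda>y. (bmp a r y - bmp a r s) / (y - s)) \<longlongrightarrow> 0) (at s)"
    proof (rule Lim_null_comparison[OF _ tendsto_norm_zero[OF vq]])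
      show "\<forall>\<^sub>F y in at s. norm ((bmp a r y - bmp a r s) / (y - s)) \<le> norm (((u y)\<^sup>2 - (u s)\<^sup>2) / (y - s))"
      proof (intro always_eventually allI)
        fix y
        have "bmp a r s = 0" unfolding bmp_def using 3 by (simp add: u_def)
        moreover have "\<bar>bmp a r y\<bar> \<le> (u y)\<^sup>2"
          unfolding bmp_def u_def[symmetric] by (cases "u y \<ge> 0") (auto simp: max_def)
        ultimately show "norm ((bmp a r y - bmp a r s) / (y - s)) \<le> norm (((u y)\<^sup>2 - (u s)\<^sup>2) / (y - s))"
          using 3 by (simp add: abs_divide divide_right_mono)
      qed
    qed
    then show ?thesis unfolding has_field_derivative_iff b0 .
  qed
qed

lemma bmp_cont: "continuous_on S (bmp' a r)"
  unfolding bmp'_def by (intro continuous_intros)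

lemma bmp_nonneg: "bmp a r s \<ge> 0" unfolding bmp_def by simp

lemma bmp_bound: "\<bar>r\<bar> \<le> 1 \<Longrightarrow> bmp a r s \<le> 1"
proof -
  assume r: "\<bar>r\<bar> \<le> 1"
  have "r\<^sup>2 \<le> 1" using r by (simp add: abs_le_square_iff power2_eq_square) (metis abs_mult_self_eq mult_le_one abs_ge_zero r)
  then have "max 0 (r\<^sup>2 - (s - a)\<^sup>2) \<le> 1" using zero_le_power2[of "s - a"] by (intro max.boundedI) linarith+
  then show ?thesis unfolding bmp_def by (simp add: power_le_one)
qed

lemma bmp'_bound: "\<bar>r\<bar> \<le> 1 \<Longrightarrow> \<bar>bmp' a r s\<bar> \<le> 4"
proof -
  assume r: "\<bar>r\<bar> \<le> 1"
  have r2: "r\<^sup>2 \<le> 1" using r by (metis abs_mult_self_eq mult_le_one abs_ge_zero power2_eq_square)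
  show ?thesis
  proof (cases "r\<^sup>2 - (s - a)\<^sup>2 \<le> 0")
    case True then show ?thesis unfolding bmp'_def by (simp add: max_def)
  next
    case False
    then have "(s - a)\<^sup>2 < 1" using r2 by simp
    then have sa: "\<bar>s - a\<bar> \<le> 1" by (metis abs_le_square_iff abs_one less_eq_real_def one_power2)
    have m: "max 0 (r\<^sup>2 - (s - a)\<^sup>2) \<le> 1" using r2 zero_le_power2[of "s - a"] by (intro max.boundedI) linarith+
    have "\<bar>bmp' a r s\<bar> = 4 * max 0 (r\<^sup>2 - (s - a)\<^sup>2) * \<bar>s - a\<bar>"
    proof -
      have "\<bar>2 * a - 2 * s\<bar> = 2 * \<bar>s - a\<bar>" by (simp add: abs_if)
      then show ?thesis unfolding bmp'_def by (simp add: abs_mult)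
    qed
    also have "\<dots> \<le> 4 * 1 * 1" by (intro mult_mono m sa) auto
    finally show ?thesis by simp
  qed
qed

lemma bmp_zero: "\<bar>s - a\<bar> \<ge> r \<Longrightarrow> r \<ge> 0 \<Longrightarrow> bmp a r s = 0"
proof -
  assume "\<bar>s - a\<bar> \<ge> r" "r \<ge> 0"
  then have "r\<^sup>2 \<le> (s - a)\<^sup>2" by (metis abs_le_square_iff abs_of_nonneg)
  then show ?thesis unfolding bmp_def by (simp add: max_def)
qed

lemma bmp_pos_imp: "bmp a r s > 0 \<Longrightarrow> \<bar>s - a\<bar> < \<bar>r\<bar>"
proof (rule ccontr)
  assume "bmp a r s > 0" "\<not> \<bar>s - a\<bar> < \<bar>r\<bar>"
  then have "r\<^sup>2 \<le> (s - a)\<^sup>2" by (simp add: abs_le_square_iff[symmetric])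
  then have "bmp a r s = 0" unfolding bmp_def by (simp add: max_def)
  with \<open>bmp a r s > 0\<close> show False by simp
qed

lemma bmp_center: "r \<noteq> 0 \<Longrightarrow> bmp a r a > 0"
  unfolding bmp_def by (simp add: max_def)

lemma box01: "q \<in> box (0,0) (1::real,1::real) \<longleftrightarrow> fst q \<in> {0<..<1} \<and> snd q \<in> {0<..<1}"
  by (cases q) (auto simp: mem_box Basis_prod_def)

lemma box01_ne: "box (0,0) (1::real,1::real) \<noteq> {}"
  using box01[of "(1/2, 1/2)"] by auto

lemma sq_closure: "closure (box (0,0) (1::real,1::real)) = unit_sq"
  using box01_ne by (simp add: unit_sq_cbox)

lemma g_sum_int:
  fixes \<rho> g h :: "'a::euclidean_space \<Rightarrow> real"
  assumes "\<rho> \<in> borel_measurable lborel" "\<And>x. \<rho> x \<ge> 0"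
    "g \<in> borel_measurable lborel" "h \<in> borel_measurable lborel"
    "integrable lborel (\<lambda>x. (g x)\<^sup>2 * \<rho> x)" "integrable lborel (\<lambda>x. (h x)\<^sup>2 * \<rho> x)"
  shows "integrable lborel (\<lambda>x. (\<bar>g x\<bar> + \<bar>h x\<bar>)\<^sup>2 * \<rho> x)"
proof (rule Bochner_Integration.integrable_bound[where f = "\<lambda>x. 2 * ((g x)\<^sup>2 * \<rho> x) + 2 * ((h x)\<^sup>2 * \<rho> x)"])
  show "integrable lborel (\<lambda>x. 2 * ((g x)\<^sup>2 * \<rho> x) + 2 * ((h x)\<^sup>2 * \<rho> x))"
    using assms by auto
  show "(\<lambda>x. (\<bar>g x\<bar> + \<bar>h x\<bar>)\<^sup>2 * \<rho> x) \<in> borel_measurable lborel" using assms by measurable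
  show "AE x in lborel. norm ((\<bar>g x\<bar> + \<bar>h x\<bar>)\<^sup>2 * \<rho> x) \<le> norm (2 * ((g x)\<^sup>2 * \<rho> x) + 2 * ((h x)\<^sup>2 * \<rho> x))"
  proof (intro AE_I2)
    fix x
    have "0 \<le> (\<bar>g x\<bar> - \<bar>h x\<bar>)\<^sup>2" by simp
    moreover have "(\<bar>g x\<bar> + \<bar>h x\<bar>)\<^sup>2 + (\<bar>g x\<bar> - \<bar>h x\<bar>)\<^sup>2 = 2 * (g x)\<^sup>2 + 2 * (h x)\<^sup>2"
      by (simp add: power2_sum power2_diff)
    ultimately have "(\<bar>g x\<bar> + \<bar>h x\<bar>)\<^sup>2 \<le> 2 * (g x)\<^sup>2 + 2 * (h x)\<^sup>2" by linarith
    then have "(\<bar>g x\<bar> + \<bar>h x\<bar>)\<^sup>2 * \<rho> x \<le> (2 * (g x)\<^sup>2 + 2 * (h x)\<^sup>2) * \<rho> x"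
      using assms(2)[of x] by (rule mult_right_mono)
    then show "norm ((\<bar>g x\<bar> + \<bar>h x\<bar>)\<^sup>2 * \<rho> x) \<le> norm (2 * ((g x)\<^sup>2 * \<rho> x) + 2 * ((h x)\<^sup>2 * \<rho> x))"
      using assms(2)[of x] by (simp add: algebra_simps)
  qed
qed


lemma backward:
  assumes S: "setting \<rho> g Ts Tt Tss Tst Tts Ttt"
    and gm: "g \<in> borel_measurable lborel"
    and R: "\<forall>s\<in>{0<..<1}. \<forall>t\<in>{0<..<1}.
            AE x in density lborel (\<lambda>x. ennreal (\<rho> x)). EL_lhs \<rho> Ts Tt s t x = 0"
  shows "stationary \<rho> Ts Tt"
  unfolding stationary_def
proof (intro allI impI)
  fix V Vs Vt assume tm: "test_map \<rho> V Vs Vt"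
  interpret setting \<rho> g Ts Tt Tss Tst Tts Ttt by (rule S)
  have VC1: "C1_param V Vs Vt" and van: "\<And>r x. r \<in> {0..1} \<Longrightarrow> V 0 r x = 0 \<and> V 1 r x = 0 \<and> V r 0 x = 0 \<and> V r 1 x = 0"
    and dom: "L2_dominated \<rho> [V, Vs, Vt]" using tm unfolding test_map_def by auto
  obtain gV where gVm: "gV \<in> borel_measurable lborel" and gVi: "integrable lborel (\<lambda>x. (gV x)\<^sup>2 * \<rho> x)"
    and gVb: "\<And>F p x. F \<in> set [V, Vs, Vt] \<Longrightarrow> p \<in> unit_sq \<Longrightarrow> norm (F (fst p) (snd p) x) \<le> gV x"
    and Vm: "\<And>F p. F \<in> set [V, Vs, Vt] \<Longrightarrow> p \<in> unit_sq \<Longrightarrow> F (fst p) (snd p) \<in> borel_measurable lborel"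
    using dom unfolding L2_dominated_def by blast
  define g' where "g' x = \<bar>g x\<bar> + \<bar>gV x\<bar>" for x
  have g'i: "integrable lborel (\<lambda>x. (g' x)\<^sup>2 * \<rho> x)"
    unfolding g'_def by (rule g_sum_int[OF \<rho>m \<rho>0 gm gVm gi gVi])
  have S': "setting \<rho> g' Ts Tt Tss Tst Tts Ttt"
  proof
    show "F s t \<in> borel_measurable lborel \<and> (\<forall>x. norm (F s t x) \<le> g' x)"
      if "F \<in> {Ts, Tt, Tss, Tst, Tts, Ttt}" "s \<in> {0..1}" "t \<in> {0..1}" for F s t
    proof -
      have "F s t \<in> borel_measurable lborel" "\<And>x. norm (F s t x) \<le> g x" using Tgood[OF that] by auto
      moreover have "g x \<le> \<bar>g x\<bar> + \<bar>gV x\<bar>" for x by simp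
      ultimately show ?thesis unfolding g'_def using order_trans by blast
    qed
  qed (use \<rho>m \<rho>0 g'i Ts_C1 Tt_C1 Dpos in auto)
  have gV': "setting.good g' F" if "F \<in> set [V, Vs, Vt]" for F
    unfolding setting.good_def[OF S']
  proof (intro ballI conjI allI)
    fix s t :: real and x assume st: "s \<in> {0..1}" "t \<in> {0..1}"
    have p: "(s, t) \<in> unit_sq" using st by (simp add: unit_sq_def)
    show "F s t \<in> borel_measurable lborel" using Vm[OF that p] by simp
    show "norm (F s t x) \<le> g' x" using gVb[OF that p, of x] unfolding g'_def by simp
  qed
  interpret W: withV \<rho> g' Ts Tt Tss Tst Tts Ttt V Vs Vt
  proof -
    show "withV \<rho> g' Ts Tt Tss Tst Tts Ttt V Vs Vt"
      by (intro withV.intro withV0.intro withV_axioms.intro withV0_axioms.intro S' VC1 van gV') auto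
  qed
  have H0: "W.H q = 0" if q: "q \<in> box (0,0) (1,1)" for q
  proof -
    have s: "fst q \<in> {0<..<1}" and t: "snd q \<in> {0<..<1}" using q box01 by auto
    have qs: "q \<in> unit_sq" using s t by (auto simp: unit_sq_def mem_Times_iff)
    have "W.H q = wint \<rho> (\<lambda>x. V (fst q) (snd q) x \<bullet> EL_lhs \<rho> Ts Tt (fst q) (snd q) x)"
      unfolding W.H_eq[OF qs] W.EL_eq[OF s t] ..
    also have "\<dots> = 0"
      unfolding wint_def
    proof (rule integral_eq_zero_AE)
      have "AE x in lborel. 0 < ennreal (\<rho> x) \<longrightarrow> EL_lhs \<rho> Ts Tt (fst q) (snd q) x = 0"
        using R s t AE_density[of "\<lambda>x. ennreal (\<rho> x)" lborel] \<rho>m by auto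
      then show "AE x in lborel. (V (fst q) (snd q) x \<bullet> EL_lhs \<rho> Ts Tt (fst q) (snd q) x) * \<rho> x = 0"
      proof (rule AE_mp, intro AE_I2 impI)
        fix x assume "0 < ennreal (\<rho> x) \<longrightarrow> EL_lhs \<rho> Ts Tt (fst q) (snd q) x = 0"
        then show "(V (fst q) (snd q) x \<bullet> EL_lhs \<rho> Ts Tt (fst q) (snd q) x) * \<rho> x = 0"
          using \<rho>0[of x] by (cases "\<rho> x = 0") auto
      qed
    qed
    finally show ?thesis .
  qed
  have "W.H q = 0" if "q \<in> unit_sq" for q
    by (rule continuous_constant_on_closure[where S = "box (0,0) (1,1)"])
       (use W.cH H0 that in \<open>auto simp: sq_closure\<close>)
  then have "J W.H = 0" unfolding J_def unit_sq_cbox by (simp add: integral_cong)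
  then show "((\<lambda>\<epsilon>. action \<rho> (\<lambda>s t x. Ts s t x + \<epsilon> *\<^sub>R Vs s t x) (\<lambda>s t x. Tt s t x + \<epsilon> *\<^sub>R Vt s t x)) has_real_derivative 0) (at 0)"
    using W.FV by simp
qed


lemma cbmp: "continuous_on S (\<lambda>q::real\<times>real. bmp a r (fst q))" "continuous_on S (\<lambda>q::real\<times>real. bmp a r (snd q))"
  "continuous_on S (\<lambda>q::real\<times>real. bmp' a r (fst q))" "continuous_on S (\<lambda>q::real\<times>real. bmp' a r (snd q))"
  unfolding bmp_def bmp'_def by (intro continuous_intros)+

lemma bump_C1:
  fixes W :: "'a::euclidean_space \<Rightarrow> 'a"
  shows "C1_param (\<lambda>s t x. (bmp a r s * bmp b r t) *\<^sub>R W x)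
            (\<lambda>s t x. (bmp' a r s * bmp b r t) *\<^sub>R W x) (\<lambda>s t x. (bmp a r s * bmp' b r t) *\<^sub>R W x)"
  unfolding C1_param_def
proof (intro allI conjI ballI)
  fix x and p :: "real \<times> real"
  have d1: "((\<lambda>q. bmp a r (fst q)) has_derivative (\<lambda>h. bmp' a r (fst p) * fst h)) (at p within unit_sq)"
    using has_derivative_compose[OF has_derivative_fst[OF has_derivative_ident, of "at p within unit_sq"]
        bmp_deriv[of a r "fst p", unfolded has_field_derivative_def]] .
  have d2: "((\<lambda>q. bmp b r (snd q)) has_derivative (\<lambda>h. bmp' b r (snd p) * snd h)) (at p within unit_sq)"
    using has_derivative_compose[OF has_derivative_snd[OF has_derivative_ident, of "at p within unit_sq"]
        bmp_deriv[of b r "snd p", unfolded has_field_derivative_def]] .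
  have "((\<lambda>q. (bmp a r (fst q) * bmp b r (snd q)) *\<^sub>R W x) has_derivative
      (\<lambda>h. (bmp a r (fst p) * (bmp' b r (snd p) * snd h) + bmp' a r (fst p) * fst h * bmp b r (snd p)) *\<^sub>R W x))
      (at p within unit_sq)"
    by (rule has_derivative_scaleR_left[OF has_derivative_mult[OF d1 d2]])
  then show "((\<lambda>q. (bmp a r (fst q) * bmp b r (snd q)) *\<^sub>R W x) has_derivative
      (\<lambda>h. fst h *\<^sub>R (bmp' a r (fst p) * bmp b r (snd p)) *\<^sub>R W x + snd h *\<^sub>R (bmp a r (fst p) * bmp' b r (snd p)) *\<^sub>R W x))
      (at p within unit_sq)"
    by (rule has_derivative_eq_rhs) (simp add: fun_eq_iff scaleR_add_left algebra_simps)
next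
  fix x
  show "continuous_on unit_sq (\<lambda>q. (bmp' a r (fst q) * bmp b r (snd q)) *\<^sub>R W x)"
    by (intro continuous_on_scaleR continuous_on_mult cbmp continuous_on_const)
  show "continuous_on unit_sq (\<lambda>q. (bmp a r (fst q) * bmp' b r (snd q)) *\<^sub>R W x)"
    by (intro continuous_on_scaleR continuous_on_mult cbmp continuous_on_const)
qed


lemma bump_test:
  fixes W :: "'a::euclidean_space \<Rightarrow> 'a" and \<rho> :: "'a \<Rightarrow> real"
  assumes Wm: "W \<in> borel_measurable lborel" and Wb: "\<And>x. norm (W x) \<le> 1/4"
    and \<rho>i: "integrable lborel \<rho>"
    and r: "0 < r" "r \<le> 1" "r \<le> a" "r \<le> 1 - a" "r \<le> b" "r \<le> 1 - b"
  shows "test_map \<rho> (\<lambda>s t x. (bmp a r s * bmp b r t) *\<^sub>R W x)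
            (\<lambda>s t x. (bmp' a r s * bmp b r t) *\<^sub>R W x) (\<lambda>s t x. (bmp a r s * bmp' b r t) *\<^sub>R W x)"
    and "\<And>s t x. norm ((bmp a r s * bmp b r t) *\<^sub>R W x) \<le> 1"
    and "\<And>s t x. norm ((bmp' a r s * bmp b r t) *\<^sub>R W x) \<le> 1"
    and "\<And>s t x. norm ((bmp a r s * bmp' b r t) *\<^sub>R W x) \<le> 1"
proof -
  have ra: "\<bar>r\<bar> \<le> 1" using r by simp
  have b1: "\<bar>bmp c r u\<bar> \<le> 1" for c u using bmp_bound[OF ra] bmp_nonneg by (simp add: abs_of_nonneg)
  have b4: "\<bar>bmp' c r u\<bar> \<le> 4" for c u using bmp'_bound[OF ra] .
  have nb: "norm ((c * d) *\<^sub>R W x) \<le> 1" if "\<bar>c * d\<bar> \<le> 4" for c d x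
  proof -
    have "norm ((c * d) *\<^sub>R W x) = \<bar>c * d\<bar> * norm (W x)" by simp
    also have "\<dots> \<le> 4 * (1/4)" by (intro mult_mono that Wb) auto
    finally show ?thesis by simp
  qed
  have m1: "\<bar>bmp c r u * bmp e r v\<bar> \<le> 4" for c u e v
    using mult_mono[OF b1[of c u] b1[of e v]] by (simp add: abs_mult)
  have m2: "\<bar>bmp' c r u * bmp e r v\<bar> \<le> 4" for c u e v
    using mult_mono[OF b4[of c u] b1[of e v]] by (simp add: abs_mult)
  have m3: "\<bar>bmp c r u * bmp' e r v\<bar> \<le> 4" for c u e v
    using mult_mono[OF b1[of c u] b4[of e v]] by (simp add: abs_mult)
  show n1: "norm ((bmp a r s * bmp b r t) *\<^sub>R W x) \<le> 1" for s t x by (rule nb[OF m1])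
  show n2: "norm ((bmp' a r s * bmp b r t) *\<^sub>R W x) \<le> 1" for s t x by (rule nb[OF m2])
  show n3: "norm ((bmp a r s * bmp' b r t) *\<^sub>R W x) \<le> 1" for s t x by (rule nb[OF m3])
  have z: "bmp a r 0 = 0" "bmp a r 1 = 0" "bmp b r 0 = 0" "bmp b r 1 = 0"
    using r by (auto intro!: bmp_zero)
  show "test_map \<rho> (\<lambda>s t x. (bmp a r s * bmp b r t) *\<^sub>R W x)
            (\<lambda>s t x. (bmp' a r s * bmp b r t) *\<^sub>R W x) (\<lambda>s t x. (bmp a r s * bmp' b r t) *\<^sub>R W x)"
    unfolding test_map_def
  proof (intro conjI bump_C1 ballI allI)
    show "(bmp a r 0 * bmp b r u) *\<^sub>R W x = 0" "(bmp a r 1 * bmp b r u) *\<^sub>R W x = 0"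
      "(bmp a r u * bmp b r 0) *\<^sub>R W x = 0" "(bmp a r u * bmp b r 1) *\<^sub>R W x = 0" for u x
      using z by auto
    show "L2_dominated \<rho> [\<lambda>s t x. (bmp a r s * bmp b r t) *\<^sub>R W x,
            \<lambda>s t x. (bmp' a r s * bmp b r t) *\<^sub>R W x, \<lambda>s t x. (bmp a r s * bmp' b r t) *\<^sub>R W x]"
      unfolding L2_dominated_def
    proof (intro conjI exI[of _ "\<lambda>x. 1"])
      show "\<forall>F\<in>set [\<lambda>s t x. (bmp a r s * bmp b r t) *\<^sub>R W x,
            \<lambda>s t x. (bmp' a r s * bmp b r t) *\<^sub>R W x, \<lambda>s t x. (bmp a r s * bmp' b r t) *\<^sub>R W x].
            \<forall>p\<in>unit_sq. F (fst p) (snd p) \<in> borel_measurable lborel"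
        using Wm by auto
      show "(\<lambda>x. 1::real) \<in> borel_measurable lborel" by simp
      show "integrable lborel (\<lambda>x. (1::real)\<^sup>2 * \<rho> x)" using \<rho>i by simp
      show "\<forall>F\<in>set [\<lambda>s t x. (bmp a r s * bmp b r t) *\<^sub>R W x,
            \<lambda>s t x. (bmp' a r s * bmp b r t) *\<^sub>R W x, \<lambda>s t x. (bmp a r s * bmp' b r t) *\<^sub>R W x].
            \<forall>p\<in>unit_sq. \<forall>x. norm (F (fst p) (snd p) x) \<le> 1"
        using n1 n2 n3 by auto
    qed
  qed
qed


lemma forward:
  assumes S: "setting \<rho> g Ts Tt Tss Tst Tts Ttt"
    and gm: "g \<in> borel_measurable lborel" and \<rho>i: "integrable lborel \<rho>"
    and stat: "stationary \<rho> Ts Tt"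
    and s0: "s0 \<in> {0<..<1}" and t0: "t0 \<in> {0<..<1}"
  shows "AE x in density lborel (\<lambda>x. ennreal (\<rho> x)). EL_lhs \<rho> Ts Tt s0 t0 x = 0"
proof -
  interpret S0: setting \<rho> g Ts Tt Tss Tst Tts Ttt by (rule S)
  define g1 where "g1 x = \<bar>g x\<bar> + \<bar>1\<bar>" for x
  have g1i: "integrable lborel (\<lambda>x. (g1 x)\<^sup>2 * \<rho> x)"
    unfolding g1_def by (rule g_sum_int[OF S0.\<rho>m S0.\<rho>0 gm]) (use S0.gi \<rho>i in auto)
  have S1: "setting \<rho> g1 Ts Tt Tss Tst Tts Ttt"
  proof
    show "F s t \<in> borel_measurable lborel \<and> (\<forall>x. norm (F s t x) \<le> g1 x)"
      if "F \<in> {Ts, Tt, Tss, Tst, Tts, Ttt}" "s \<in> {0..1}" "t \<in> {0..1}" for F s t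
    proof -
      have "F s t \<in> borel_measurable lborel" "\<And>x. norm (F s t x) \<le> g x" using S0.Tgood[OF that] by auto
      moreover have "g x \<le> g1 x" for x unfolding g1_def by simp
      ultimately show ?thesis using order_trans by blast
    qed
  qed (use S0.\<rho>m S0.\<rho>0 g1i S0.Ts_C1 S0.Tt_C1 S0.Dpos in auto)
  interpret S1: setting \<rho> g1 Ts Tt Tss Tst Tts Ttt by (rule S1)
  have g1ge: "1 \<le> g1 x" for x unfolding g1_def by simp
  have s01: "s0 \<in> {0..1}" and t01: "t0 \<in> {0..1}" using s0 t0 by auto
  define E where "E = S1.ELp s0 t0"
  have Em: "E \<in> borel_measurable lborel"
  proof -
    have [measurable]: "Ts s0 t0 \<in> borel_measurable lborel" "Tt s0 t0 \<in> borel_measurable lborel"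
      "Tss s0 t0 \<in> borel_measurable lborel" "Tst s0 t0 \<in> borel_measurable lborel"
      "Tts s0 t0 \<in> borel_measurable lborel" "Ttt s0 t0 \<in> borel_measurable lborel"
      using S1.Tgood s01 t01 by auto
    show ?thesis unfolding E_def S1.ELp_def by measurable
  qed
  define W where "W x = (1 / (4 * (1 + norm (E x)))) *\<^sub>R E x" for x
  have Wm: "W \<in> borel_measurable lborel" unfolding W_def using Em by measurable
  have Wb: "norm (W x) \<le> 1/4" for x
  proof -
    have "norm (W x) = norm (E x) / (4 * (1 + norm (E x)))" unfolding W_def by simp
    also have "\<dots> \<le> 1/4"
    proof -
      have "0 < 4 * (1 + norm (E x))" by (simp add: add_pos_nonneg)
      then show ?thesis by (subst pos_divide_le_eq) auto
    qed
    finally show ?thesis .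
  qed
  have WE: "W x \<bullet> E x = (norm (E x))\<^sup>2 / (4 * (1 + norm (E x)))" for x
    unfolding W_def by (simp add: power2_norm_eq_inner)
  define Z where "Z = (\<lambda>(s::real) (t::real) (x::'a). 0::'a)"
  have gW: "setting.good g1 (\<lambda>s t. W)" "setting.good g1 Z"
  proof -
    have "norm (W x) \<le> g1 x" for x using Wb[of x] g1ge[of x] by linarith
    then show "setting.good g1 (\<lambda>s t. W)" "setting.good g1 Z"
      unfolding setting.good_def[OF S1] Z_def using Wm g1ge by (auto intro: order_trans)
  qed
  have C1W: "C1_param (\<lambda>s t. W) Z Z" unfolding C1_param_def Z_def by simp
  interpret w0: withV0 \<rho> g1 Ts Tt Tss Tst Tts Ttt "\<lambda>s t. W" Z Z
    by (intro withV0.intro withV0_axioms.intro S1 C1W gW)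
  define h where "h = w0.H"
  have hc: "continuous_on unit_sq h" unfolding h_def by (rule w0.cH)
  have p0: "(s0, t0) \<in> unit_sq" using s01 t01 by (simp add: unit_sq_def)
  have hq: "h q = wint \<rho> (\<lambda>x. W x \<bullet> S1.ELp (fst q) (snd q) x)" if "q \<in> unit_sq" for q
    unfolding h_def using w0.H_eq[OF that] by simp
  have hint: "integrable lborel (\<lambda>x. (W x \<bullet> E x) * \<rho> x)"
    using w0.H_int[OF p0] unfolding E_def by simp
  have h0: "h (s0, t0) = (LINT x|lborel. (W x \<bullet> E x) * \<rho> x)"
    unfolding hq[OF p0] wint_def E_def by simp
  have nn: "0 \<le> (W x \<bullet> E x) * \<rho> x" for x unfolding WE using S1.\<rho>0[of x] by simp
  have hz: "h (s0, t0) = 0"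
  proof (rule ccontr)
    assume "h (s0, t0) \<noteq> 0"
    moreover have "h (s0, t0) \<ge> 0" unfolding h0 using nn by (simp add: integral_nonneg)
    ultimately have hp: "h (s0, t0) > 0" by simp
    obtain d where d: "d > 0" and dh: "\<And>q. q \<in> unit_sq \<Longrightarrow> dist q (s0, t0) < d \<Longrightarrow> h q > 0"
    proof -
      obtain d where "d > 0" "\<forall>q\<in>unit_sq. dist q (s0, t0) < d \<longrightarrow> dist (h q) (h (s0, t0)) < h (s0, t0)"
        using hc p0 hp unfolding continuous_on_iff by blast
      moreover have "h q > 0" if "q \<in> unit_sq" "dist q (s0, t0) < d" for q
      proof -
        have "\<bar>h q - h (s0, t0)\<bar> < h (s0, t0)" using calculation(2) that by (auto simp: dist_real_def)
        then show ?thesis by linarith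
      qed
      ultimately show ?thesis using that[of d] by blast
    qed
    define r where "r = min (min (d/2) 1) (min (min s0 (1 - s0)) (min t0 (1 - t0)))"
    have rd: "r \<le> d/2" unfolding r_def by (rule order_trans[OF min.cobounded1 min.cobounded1])
    have r: "0 < r" "r \<le> 1" "r \<le> s0" "r \<le> 1 - s0" "r \<le> t0" "r \<le> 1 - t0" "2 * r \<le> d"
    proof -
      show "2 * r \<le> d" using rd by linarith
    qed (unfold r_def, use d s0 t0 in auto)
    let ?V = "\<lambda>s t x. (bmp s0 r s * bmp t0 r t) *\<^sub>R W x"
    let ?Vs = "\<lambda>s t x. (bmp' s0 r s * bmp t0 r t) *\<^sub>R W x"
    let ?Vt = "\<lambda>s t x. (bmp s0 r s * bmp' t0 r t) *\<^sub>R W x"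
    note bt = bump_test[OF Wm Wb \<rho>i r(1-6)]
    have tm: "test_map \<rho> ?V ?Vs ?Vt" by (rule bt(1))
    have gV: "setting.good g1 F" if "F \<in> set [?V, ?Vs, ?Vt]" for F
      unfolding setting.good_def[OF S1]
    proof -
      have "norm (F s t x) \<le> g1 x" for s t x
        using that bt(2)[of s t x] bt(3)[of s t x] bt(4)[of s t x] g1ge[of x] by auto
      moreover have "F s t \<in> borel_measurable lborel" for s t using that Wm by auto
      ultimately show "\<forall>s\<in>{0..1}. \<forall>t\<in>{0..1}. F s t \<in> borel_measurable lborel \<and> (\<forall>x. norm (F s t x) \<le> g1 x)"
        by blast
    qed
    interpret w1: withV \<rho> g1 Ts Tt Tss Tst Tts Ttt ?V ?Vs ?Vt
    proof (intro withV.intro withV0.intro withV_axioms.intro withV0_axioms.intro S1 gV)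
      show "C1_param ?V ?Vs ?Vt" by (rule bump_C1)
      show "?V 0 u x = 0 \<and> ?V 1 u x = 0 \<and> ?V u 0 x = 0 \<and> ?V u 1 x = 0" for u x
        using r by (auto simp: bmp_zero)
    qed auto
    have "((\<lambda>\<epsilon>. action \<rho> (\<lambda>s t x. Ts s t x + \<epsilon> *\<^sub>R ?Vs s t x) (\<lambda>s t x. Tt s t x + \<epsilon> *\<^sub>R ?Vt s t x)) has_real_derivative 0) (at 0)"
      using stat tm unfolding stationary_def by blast
    from DERIV_unique[OF w1.FV this] have J0: "J w1.H = 0" by simp
    have w1H: "w1.H q = (bmp s0 r (fst q) * bmp t0 r (snd q)) * h q" if "q \<in> unit_sq" for q
    proof -
      have "w1.H q = wint \<rho> (\<lambda>x. ?V (fst q) (snd q) x \<bullet> S1.ELp (fst q) (snd q) x)"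
        using w1.H_eq[OF that] .
      also have "\<dots> = (LINT x|lborel. (bmp s0 r (fst q) * bmp t0 r (snd q)) * ((W x \<bullet> S1.ELp (fst q) (snd q) x) * \<rho> x))"
        unfolding wint_def by (simp add: mult.assoc)
      also have "\<dots> = (bmp s0 r (fst q) * bmp t0 r (snd q)) * h q"
        unfolding hq[OF that] wint_def by (rule integral_mult_right_zero)
      finally show ?thesis .
    qed
    have hi: "(w1.H has_integral 0) (cbox (0,0) (1,1))"
      using w1.Jhi[OF w1.cH] J0 by simp
    have nnb: "0 \<le> w1.H q" if "q \<in> box (0,0) (1,1)" for q
    proof -
      have q: "q \<in> unit_sq" using that box01[of q] by (auto simp: unit_sq_def mem_Times_iff)
      show ?thesis
      proof (cases "bmp s0 r (fst q) * bmp t0 r (snd q) > 0")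
        case True
        then have "bmp s0 r (fst q) > 0" "bmp t0 r (snd q) > 0"
          using bmp_nonneg[of s0 r "fst q"] bmp_nonneg[of t0 r "snd q"] by (auto simp: zero_less_mult_iff)
        then have "\<bar>fst q - s0\<bar> < r" "\<bar>snd q - t0\<bar> < r" using bmp_pos_imp r(1) by force+
        moreover have "dist q (s0, t0) \<le> \<bar>fst q - s0\<bar> + \<bar>snd q - t0\<bar>"
          by (cases q) (simp add: dist_Pair_Pair dist_real_def sqrt_sum_squares_le_sum_abs)
        ultimately have "dist q (s0, t0) < d" using r(7) by linarith
        then have "h q > 0" by (rule dh[OF q])
        then show ?thesis unfolding w1H[OF q] using True by simp
      next
        case False
        then have "bmp s0 r (fst q) * bmp t0 r (snd q) = 0"
          using bmp_nonneg[of s0 r "fst q"] bmp_nonneg[of t0 r "snd q"] mult_pos_pos[of "bmp s0 r (fst q)" "bmp t0 r (snd q)"]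
          by force
        then show ?thesis unfolding w1H[OF q] by (simp only: mult_zero_left order_refl)
      qed
    qed
    have "w1.H (s0, t0) = 0"
      by (rule has_integral_0_cbox_imp_0[OF _ nnb hi box01_ne])
         (use w1.cH p0 in \<open>auto simp: unit_sq_cbox\<close>)
    moreover have "bmp s0 r s0 * bmp t0 r t0 > 0" using bmp_center r(1) by simp
    ultimately have "h (s0, t0) = 0"
    proof -
      assume H0: "w1.H (s0, t0) = 0" and cp: "bmp s0 r s0 * bmp t0 r t0 > 0"
      have "(bmp s0 r s0 * bmp t0 r t0) * h (s0, t0) = 0" using w1H[OF p0] H0 by simp
      then show ?thesis using cp by (simp only: mult_eq_0_iff) auto
    qed
    with hp show False by simp
  qed
  have "AE x in lborel. (W x \<bullet> E x) * \<rho> x = 0"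
    using hz unfolding h0 using integral_nonneg_eq_0_iff_AE[OF hint] nn by simp
  then have "AE x in lborel. 0 < ennreal (\<rho> x) \<longrightarrow> EL_lhs \<rho> Ts Tt s0 t0 x = 0"
  proof (rule AE_mp, intro AE_I2 impI)
    fix x assume z: "(W x \<bullet> E x) * \<rho> x = 0" and p: "0 < ennreal (\<rho> x)"
    then have "\<rho> x > 0" by simp
    with z have "(norm (E x))\<^sup>2 / (4 * (1 + norm (E x))) = 0" unfolding WE by simp
    then have "E x = 0" by (simp add: add_nonneg_eq_0_iff)
    then show "EL_lhs \<rho> Ts Tt s0 t0 x = 0" using S1.EL_eq[OF s0 t0] unfolding E_def by simp
  qed
  then show ?thesis using AE_density[of "\<lambda>x. ennreal (\<rho> x)" lborel] S1.\<rho>m by simp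
qed

theorem mainTheorem5:
  fixes \<rho>00 :: "'a::euclidean_space \<Rightarrow> real"
    and \<rho> :: "real \<Rightarrow> real \<Rightarrow> 'a \<Rightarrow> real"
    and T Ts Tt Tss Tst Tts Ttt :: "real \<Rightarrow> real \<Rightarrow> 'a \<Rightarrow> 'a"
  assumes dens_meas: "\<rho>00 \<in> borel_measurable lborel"
    and dens_nonneg: "\<And>x. \<rho>00 x \<ge> 0"
    and dens_int: "integrable lborel \<rho>00"
    and dens_one: "(LINT x|lborel. \<rho>00 x) = 1"
    and bdry_meas: "\<And>r. r \<in> {0..1} \<Longrightarrow>
          \<rho> 0 r \<in> borel_measurable lborel \<and> \<rho> 1 r \<in> borel_measurable lborel \<and>
          \<rho> r 0 \<in> borel_measurable lborel \<and> \<rho> r 1 \<in> borel_measurable lborel"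
    and bdry_nonneg: "\<And>r x. r \<in> {0..1} \<Longrightarrow>
          \<rho> 0 r x \<ge> 0 \<and> \<rho> 1 r x \<ge> 0 \<and> \<rho> r 0 x \<ge> 0 \<and> \<rho> r 1 x \<ge> 0"
    and T_C1: "C1_param T Ts Tt"
    and Ts_C1: "C1_param Ts Tss Tst"
    and Tt_C1: "C1_param Tt Tts Ttt"
    and T_dom: "L2_dominated \<rho>00 [T, Ts, Tt, Tss, Tst, Tts, Ttt]"
    and D_pos: "\<And>s t. s \<in> {0..1} \<Longrightarrow> t \<in> {0..1} \<Longrightarrow> Dfun \<rho>00 Ts Tt s t > 0"
    and bc_s0: "\<And>t. t \<in> {0..1} \<Longrightarrow>
          distr (density lborel (\<lambda>x. ennreal (\<rho>00 x))) lborel (T 0 t) = density lborel (\<lambda>x. ennreal (\<rho> 0 t x))"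
    and bc_s1: "\<And>t. t \<in> {0..1} \<Longrightarrow>
          distr (density lborel (\<lambda>x. ennreal (\<rho>00 x))) lborel (T 1 t) = density lborel (\<lambda>x. ennreal (\<rho> 1 t x))"
    and bc_t0: "\<And>s. s \<in> {0..1} \<Longrightarrow>
          distr (density lborel (\<lambda>x. ennreal (\<rho>00 x))) lborel (T s 0) = density lborel (\<lambda>x. ennreal (\<rho> s 0 x))"
    and bc_t1: "\<And>s. s \<in> {0..1} \<Longrightarrow>
          distr (density lborel (\<lambda>x. ennreal (\<rho>00 x))) lborel (T s 1) = density lborel (\<lambda>x. ennreal (\<rho> s 1 x))"
  shows "stationary \<rho>00 Ts Tt \<longleftrightarrow>
         (\<forall>s\<in>{0<..<1}. \<forall>t\<in>{0<..<1}.
            AE x in density lborel (\<lambda>x. ennreal (\<rho>00 x)). EL_lhs \<rho>00 Ts Tt s t x = 0)"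
proof -
  obtain g where gm: "g \<in> borel_measurable lborel" and gi: "integrable lborel (\<lambda>x. (g x)\<^sup>2 * \<rho>00 x)"
    and gb: "\<And>F p x. F \<in> set [T, Ts, Tt, Tss, Tst, Tts, Ttt] \<Longrightarrow> p \<in> unit_sq \<Longrightarrow> norm (F (fst p) (snd p) x) \<le> g x"
    and Fm: "\<And>F p. F \<in> set [T, Ts, Tt, Tss, Tst, Tts, Ttt] \<Longrightarrow> p \<in> unit_sq \<Longrightarrow> F (fst p) (snd p) \<in> borel_measurable lborel"
    using T_dom unfolding L2_dominated_def by blast
  have S: "setting \<rho>00 g Ts Tt Tss Tst Tts Ttt"
  proof
    show "F s t \<in> borel_measurable lborel \<and> (\<forall>x. norm (F s t x) \<le> g x)"
      if "F \<in> {Ts, Tt, Tss, Tst, Tts, Ttt}" "s \<in> {0..1}" "t \<in> {0..1}" for F s t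
    proof -
      have F: "F \<in> set [T, Ts, Tt, Tss, Tst, Tts, Ttt]" using that(1) by auto
      have p: "(s, t) \<in> unit_sq" using that(2,3) by (simp add: unit_sq_def)
      show ?thesis using Fm[OF F p] gb[OF F p] by simp
    qed
  qed (use dens_meas dens_nonneg gi Ts_C1 Tt_C1 D_pos in auto)
  show ?thesis
  proof
    assume stat: "stationary \<rho>00 Ts Tt"
    show "\<forall>s\<in>{0<..<1}. \<forall>t\<in>{0<..<1}.
            AE x in density lborel (\<lambda>x. ennreal (\<rho>00 x)). EL_lhs \<rho>00 Ts Tt s t x = 0"
      using forward[OF S gm dens_int stat] by blast
  next
    assume R: "\<forall>s\<in>{0<..<1}. \<forall>t\<in>{0<..<1}.
            AE x in density lborel (\<lambda>x. ennreal (\<rho>00 x)). EL_lhs \<rho>00 Ts Tt s t x = 0"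
    show "stationary \<rho>00 Ts Tt" by (rule backward[OF S gm R])
  qed
qed

end
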